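(* Let $\mathbb{M}$ be a weight sequence with sequence of quotients $\mathbf{m}=(m_p)_{p\in\mathbb{N}_0}$, and let $\beta\ge0$. The following are equivalent: (i) there exists $C>0$ such that $\sum_{k=p}^{\infty}\frac{(k+1)^{\beta-1}}{m_k}\le C\frac{(p+1)^{\beta}}{m_p}$ for all $p\in\mathbb{N}_0$; (ii) there exists $\varepsilon>0$ such that $(m_p/p^{\beta+\varepsilon})_{p\in\mathbb{N}}$ is almost increasing; (iii) there exists a sequence $\mathbf{h}\simeq\mathbf{m}$ such that $((p+1)^{-\beta}h_p)_{p\in\mathbb{N}_0}$ is nondecreasing and $\inf_{p\ge1}\frac{h_{2p}}{h_p}>2^{\beta}$; (iv) $\lim_{k\to\infty}\liminf_{p\to\infty}\frac{m_{kp}}{k^{\beta}m_p}=\infty$; (v) there exists $k\in\mathbb{N}$, $k\ge2$, such that $\liminf_{p\to\infty}\frac{m_{kp}}{m_p}>k^{\beta}$; (vi) for every $\theta\in(0,1)$ there exists $k\in\mathbb{N}$, $k\ge2$, such that $m_p\le\theta k^{-\beta}m_{kp}$ for every $p\in\mathbb{N}$; (vii) $\beta(\mathbf{m})>\beta$; (viii) $\gamma(\mathbb{M})>\beta$; (ix) there exists $C>0$ such that $\sum_{k=0}^{p}\frac{m_k}{(k+1)^{1+\beta}}\le C\frac{m_p}{(p+1)^{\beta}}$ for every $p\in\mathbb{N}_0$.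
   Context: A weight sequence is a sequence $\mathbb{M}=(M_p)_{p\in\mathbb{N}_0}$ of positive reals with $M_0=1$, logarithmically convex ($M_p^2\le M_{p-1}M_{p+1}$ for $p\in\mathbb{N}$) and $\lim_{p\to\infty}M_p^{1/p}=\infty$; its quotients are $m_p=M_{p+1}/M_p$. A sequence $(a_p)_{p\in\mathbb{N}}$ is almost increasing if there is $M>0$ with $a_p\le Ma_q$ for all $p\le q$. $\mathbf{h}\simeq\mathbf{m}$ means there is $c\ge1$ with $c^{-1}m_p\le h_p\le cm_p$ for all $p$. $\beta(\mathbf{m})$ is the lower Matuszewska index of the sequence $(m_{p-1})_{p\in\mathbb{N}}$, defined as $\beta(f)$ for the step function $f(x)=m_{\lfloor x\rfloor-1}$, $x\ge1$, where $\beta(f):=\sup\{\beta\in\mathbb{R}:\exists D_\beta>0\ \forall\Lambda>1,\ \liminf_{x\to\infty}\inf_{\lambda\in[1,\Lambda]}\frac{f(\lambda x)}{\lambda^{\beta}f(x)}\ge D_\beta\}$. For $\gamma\in\mathbb{R}$, $\mathbb{M}$ satisfies $(P_\gamma)$ if there is a real sequence $\boldsymbol{\ell}\simeq\mathbf{m}$ with $((p+1)^{-\gamma}\ell_p)_{p\in\mathbb{N}_0}$ nondecreasing; $\gamma(\mathbb{M}):=\sup\{\gamma\in\mathbb{R}:(P_\gamma)\text{ holds}\}$ ($\sup\emptyset=-\infty$). *)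

theory Defs
  imports "HOL-Analysis.Analysis"
begin

definition weight_sequence :: "(nat \<Rightarrow> real) \<Rightarrow> bool" where
  "weight_sequence M \<longleftrightarrow>
     (\<forall>p. M p > 0) \<and> M 0 = 1 \<and>
     (\<forall>p\<ge>1. (M p)\<^sup>2 \<le> M (p - 1) * M (p + 1)) \<and>
     filterlim (\<lambda>p. M p powr (1 / real p)) at_top sequentially"

definition quotients :: "(nat \<Rightarrow> real) \<Rightarrow> nat \<Rightarrow> real" where
  "quotients M p = M (Suc p) / M p"

definition almost_increasing :: "(nat \<Rightarrow> real) \<Rightarrow> bool" where
  "almost_increasing a \<longleftrightarrow> (\<exists>K>0. \<forall>p q. 1 \<le> p \<longrightarrow> p \<le> q \<longrightarrow> a p \<le> K * a q)"

definition seq_equiv :: "(nat \<Rightarrow> real) \<Rightarrow> (nat \<Rightarrow> real) \<Rightarrow> bool" where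
  "seq_equiv h m \<longleftrightarrow> (\<exists>c\<ge>1. \<forall>p. m p / c \<le> h p \<and> h p \<le> c * m p)"

text \<open>Lower Matuszewska index of a function f (defined for large x), as an extended real
  (sup of the empty set is -\<infinity>).\<close>
definition lower_matuszewska :: "(real \<Rightarrow> real) \<Rightarrow> ereal" where
  "lower_matuszewska f = Sup {ereal b | b. \<exists>D>0. \<forall>\<Lambda>>1.
      Liminf at_top (\<lambda>x. ereal (INF t\<in>{1..\<Lambda>}. f (t * x) / (t powr b * f x))) \<ge> ereal D}"

text \<open>\<beta>(m): the lower Matuszewska index of (m_{p-1})_{p\<ge>1}, via the step function
  f(x) = m_{\<lfloor>x\<rfloor>-1}, x \<ge> 1.\<close>
definition beta_index :: "(nat \<Rightarrow> real) \<Rightarrow> ereal" where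
  "beta_index m = lower_matuszewska (\<lambda>x. m (nat \<lfloor>x\<rfloor> - 1))"

definition P_cond :: "real \<Rightarrow> (nat \<Rightarrow> real) \<Rightarrow> bool" where
  "P_cond \<gamma> M \<longleftrightarrow> (\<exists>l. seq_equiv l (quotients M) \<and>
      mono (\<lambda>p. (real p + 1) powr (- \<gamma>) * l p))"

definition gamma_index :: "(nat \<Rightarrow> real) \<Rightarrow> ereal" where
  "gamma_index M = Sup {ereal \<gamma> | \<gamma>. P_cond \<gamma> M}"

end

theory Submission
  imports Defs
begin

lemma mvt_powr:
  fixes a b r :: real
  assumes "0 < a" "a < b"
  shows "\<exists>z. a < z \<and> z < b \<and> b powr r - a powr r = (b - a) * (r * z powr (r - 1))"
proof -
  have "\<And>x. a \<le> x \<Longrightarrow> x \<le> b \<Longrightarrow> ((\<lambda>z. z powr r) has_real_derivative r * x powr (r - 1)) (at x)"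
    using assms by (intro has_real_derivative_powr) auto
  from MVT2[OF assms(2) this] show ?thesis by auto
qed

lemma sum_powr_bound:
  fixes e :: real
  assumes "0 < e" "e \<le> 1"
  shows "(\<Sum>k\<le>p. (real k + 1) powr (e - 1)) \<le> (real p + 1) powr e / e"
proof (induction p)
  case 0
  then show ?case using assms by simp
next
  case (Suc p)
  obtain z where z: "real p + 1 < z" "z < real p + 2"
    "(real p + 2) powr e - (real p + 1) powr e = ((real p + 2) - (real p + 1)) * (e * z powr (e - 1))"
    using mvt_powr[of "real p + 1" "real p + 2" e] by auto
  have "(real p + 2) powr (e - 1) \<le> z powr (e - 1)"
    using z assms by (intro powr_mono2') auto
  hence "(real (Suc p) + 1) powr (e - 1) \<le> ((real (Suc p) + 1) powr e - (real p + 1) powr e) / e"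
    using z assms by (simp add: field_simps add.commute)
  with Suc show ?case using assms by (simp add: field_simps)
qed

lemma tail_step:
  fixes e :: real
  assumes "0 < e"
  shows "(real n + 1) powr (-1 - e) \<le> (2 powr (1 + e) / e) * ((real n + 1) powr (-e) - (real n + 2) powr (-e))"
proof -
  obtain z where z: "real n + 1 < z" "z < real n + 2"
    "(real n + 2) powr (-e) - (real n + 1) powr (-e) = ((real n + 2) - (real n + 1)) * (-e * z powr (-e - 1))"
    using mvt_powr[of "real n + 1" "real n + 2" "-e"] by auto
  have "(real n + 2) powr (-1 - e) \<le> z powr (-e - 1)"
  proof -
    have eq: "(-1 - e) = (-e - 1)" by simp
    show ?thesis unfolding eq using z assms powr_mono2'[of "-e-1" z "real n + 2"] by simp
  qed
  have "(real n + 2) powr (-1 - e) \<ge> (2 * (real n + 1)) powr (-1 - e)"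
    using assms by (intro powr_mono2') auto
  also have "(2 * (real n + 1)) powr (-1 - e) = 2 powr (-1 - e) * (real n + 1) powr (-1 - e)"
    by (rule powr_mult; simp)
  finally have h: "2 powr (-1 - e) * (real n + 1) powr (-1 - e) \<le> (real n + 2) powr (-1 - e)" .
  have h2: "2 powr (1 + e) * 2 powr (-1 - e) = 1"
    by (simp add: powr_add[symmetric])
  have "(real n + 1) powr (-1 - e) = 2 powr (1 + e) * (2 powr (-1 - e) * (real n + 1) powr (-1 - e))"
    using h2 by (simp add: mult.assoc[symmetric])
  also have "\<dots> \<le> 2 powr (1 + e) * (real n + 2) powr (-1 - e)"
    using h by (intro mult_left_mono) auto
  finally have "(real n + 1) powr (-1 - e) \<le> 2 powr (1 + e) * (real n + 2) powr (-1 - e)" .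
  also have "\<dots> \<le> 2 powr (1 + e) * z powr (-e - 1)"
    using \<open>(real n + 2) powr (-1 - e) \<le> z powr (-e - 1)\<close> by (simp add: algebra_simps)
  also have "\<dots> = (2 powr (1 + e) / e) * ((real n + 1) powr (-e) - (real n + 2) powr (-e))"
  proof -
    have d: "(real n + 1) powr (-e) - (real n + 2) powr (-e) = e * z powr (-e - 1)"
      using z(3) by (simp add: algebra_simps)
    show ?thesis unfolding d using assms by simp
  qed
  finally show ?thesis .
qed


lemma pow_powr: "0 < (x::real) \<Longrightarrow> (x ^ n) powr a = (x powr a) ^ n"
  by (simp add: powr_realpow[symmetric] powr_powr powr_power mult.commute)

lemma iter_growth:
  fixes f :: "nat \<Rightarrow> real"
  assumes step: "\<And>p. P0 \<le> p \<Longrightarrow> r * f p \<le> f (k * p)" and r: "0 \<le> r" and k: "1 \<le> k"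
    and p: "P0 \<le> p"
  shows "r ^ i * f p \<le> f (k ^ i * p)"
proof (induction i)
  case 0 then show ?case by simp
next
  case (Suc i)
  have "p \<le> k ^ i * p" using k by simp
  hence "P0 \<le> k ^ i * p" using p by linarith
  hence "r * f (k ^ i * p) \<le> f (k * (k ^ i * p))" by (rule step)
  moreover have "r * (r ^ i * f p) \<le> r * f (k ^ i * p)"
    using Suc r by (intro mult_left_mono) auto
  ultimately show ?case by (simp add: mult.assoc mult.left_commute)
qed

lemma arch_powr:
  fixes e :: real
  assumes "0 < e"
  shows "\<exists>N. \<forall>k\<ge>N. M < real k powr e"
proof -
  define y where "y = (max M 0 + 1) powr (1 / e)"
  have ypos: "0 < y" unfolding y_def by simp
  show ?thesis
  proof (intro exI allI impI)
    fix k :: nat assume "nat \<lceil>y\<rceil> \<le> k"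
    hence "y \<le> real k" by linarith
    hence "y powr e \<le> real k powr e" using ypos assms by (intro powr_mono2) auto
    moreover have "y powr e = max M 0 + 1"
      unfolding y_def using assms by (simp add: powr_powr)
    ultimately show "M < real k powr e" by linarith
  qed
qed

lemma max_constr:
  fixes a :: "nat \<Rightarrow> real"
  assumes pos: "\<And>p. 0 < a p" and ai: "\<And>p q. p \<le> q \<Longrightarrow> a p \<le> K * a q"
  defines "S \<equiv> \<lambda>p. Max (a ` {..p})"
  shows "\<And>p. a p \<le> S p" "\<And>p. S p \<le> K * a p" "mono S" "\<And>p. 0 < S p"
proof -
  fix p
  show "a p \<le> S p" unfolding S_def by (intro Max_ge) auto
  show "S p \<le> K * a p" unfolding S_def by (subst Max_le_iff) (auto intro: ai)
  show "0 < S p" using pos[of p] \<open>a p \<le> S p\<close> by linarith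
next
  show "mono S" unfolding S_def mono_def by (auto intro!: Max_mono)
qed

locale mq =
  fixes m :: "nat \<Rightarrow> real" and \<beta> :: real
  assumes mpos: "\<And>p. 0 < m p" and mmono: "mono m" and bpos: "0 \<le> \<beta>"
begin

lemma mle: "p \<le> q \<Longrightarrow> m p \<le> m q" using mmono by (simp add: mono_def)

definition "C6 \<equiv> (\<forall>\<theta>::real. 0 < \<theta> \<and> \<theta> < 1 \<longrightarrow> (\<exists>k::nat. k \<ge> 2 \<and>
                 (\<forall>p\<ge>1. m p \<le> \<theta> * real k powr (- \<beta>) * m (k * p))))"
definition "C2 \<equiv> (\<exists>\<epsilon>>0. almost_increasing (\<lambda>p. m p / real p powr (\<beta> + \<epsilon>)))"

lemma growth_c6:
  assumes b: "2 \<le> b" and A: "0 < A" and rho: "1 < \<rho>"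
    and g: "\<And>j p. J0 \<le> j \<Longrightarrow> 1 \<le> p \<Longrightarrow> A * \<rho> ^ j * real (b ^ j) powr \<beta> * m p \<le> m (b ^ j * p)"
  shows C6
  unfolding C6_def
proof (intro allI impI)
  fix \<theta> :: real assume th: "0 < \<theta> \<and> \<theta> < 1"
  obtain n where n: "1 / (A * \<theta>) < \<rho> ^ n" using real_arch_pow[OF rho] by blast
  define j where "j = n + J0 + 1"
  have "\<rho> ^ n \<le> \<rho> ^ j" unfolding j_def using rho by (intro power_increasing) auto
  have "A * \<theta> * \<rho> ^ n \<le> A * \<theta> * \<rho> ^ j"
    using \<open>\<rho> ^ n \<le> \<rho> ^ j\<close> A th by (intro mult_left_mono) auto
  moreover have "1 < A * \<theta> * \<rho> ^ n" using n A th by (simp add: field_simps)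
  ultimately have big: "1 < A * \<theta> * \<rho> ^ j" by linarith
  define k where "k = b ^ j"
  have "b ^ 1 \<le> b ^ j" unfolding j_def using b by (intro power_increasing) auto
  hence k2: "2 \<le> k" unfolding k_def using b by simp
  have kpos: "0 < real k" using k2 by simp
  show "\<exists>k::nat. k \<ge> 2 \<and> (\<forall>p\<ge>1. m p \<le> \<theta> * real k powr (- \<beta>) * m (k * p))"
  proof (intro exI conjI allI impI)
    show "2 \<le> k" by (fact k2)
    fix p :: nat assume p: "1 \<le> p"
    have gg: "A * \<rho> ^ j * real k powr \<beta> * m p \<le> m (k * p)"
      unfolding k_def using g[of j p] p unfolding j_def by simp
    have "\<theta> * real k powr (- \<beta>) * (A * \<rho> ^ j * real k powr \<beta> * m p) = (A * \<theta> * \<rho> ^ j) * m p"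
      using kpos by (simp add: powr_minus field_simps)
    moreover have "\<theta> * real k powr (- \<beta>) * (A * \<rho> ^ j * real k powr \<beta> * m p)
        \<le> \<theta> * real k powr (- \<beta>) * m (k * p)"
      using gg th kpos by (intro mult_left_mono) auto
    moreover have "m p \<le> (A * \<theta> * \<rho> ^ j) * m p" using big mpos[of p] by simp
    ultimately show "m p \<le> \<theta> * real k powr (- \<beta>) * m (k * p)" by linarith
  qed
qed

end

context mq begin

lemma c6_c2: assumes C6 shows C2
proof -
  obtain k :: nat where k2: "2 \<le> k" and kp: "\<forall>p\<ge>1. m p \<le> (1/2) * real k powr (- \<beta>) * m (k * p)"
    using spec[OF assms[unfolded C6_def], of "1/2"] by auto
  define X where "X = real k powr \<beta>"
  have kpos: "1 < real k" using k2 by simp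
  have Xpos: "0 < X" unfolding X_def using kpos by simp
  define r where "r = 2 * X"
  have rpos: "0 < r" unfolding r_def using Xpos by simp
  have step: "r * m p \<le> m (k * p)" if "1 \<le> p" for p
  proof -
    have "m p \<le> (1/2) * inverse X * m (k * p)" using kp that unfolding X_def by (simp add: powr_minus)
    thus ?thesis unfolding r_def using Xpos by (simp add: field_simps)
  qed
  have it: "r ^ i * m p \<le> m (k ^ i * p)" if "1 \<le> p" for p i
    using iter_growth[of 1 r m k p i] step that rpos k2 by auto
  define \<epsilon> where "\<epsilon> = log (real k) 2"
  have epos: "0 < \<epsilon>" unfolding \<epsilon>_def using kpos by simp
  have ke: "real k powr \<epsilon> = 2" unfolding \<epsilon>_def using kpos by simp
  define \<gamma> where "\<gamma> = \<beta> + \<epsilon>"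
  have kg: "real k powr \<gamma> = 2 * X" unfolding \<gamma>_def X_def by (simp add: powr_add ke)
  have "almost_increasing (\<lambda>p. m p / real p powr (\<beta> + \<epsilon>))"
    unfolding almost_increasing_def
  proof (intro exI[of _ r] conjI allI impI)
    show "0 < r" by (fact rpos)
    fix p q :: nat assume p1: "1 \<le> p" and pq: "p \<le> q"
    have d1: "1 \<le> q div p" using p1 pq div_le_mono[OF pq, of p] by simp
    obtain n where n1: "k ^ n \<le> q div p" and n2: "q div p < k ^ (n + 1)"
      using ex_power_ivl1[OF k2 d1] by blast
    have h1: "k ^ n * p \<le> q"
      using n1 div_times_less_eq_dividend[of q p] by (meson le_trans mult_le_mono1)
    have "q < (q div p + 1) * p"
    proof -
      have a: "q mod p < p" using p1 by simp
      have b: "q div p * p + q mod p = q" by (rule div_mult_mod_eq)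
      have c: "(q div p + 1) * p = q div p * p + p" by simp
      show ?thesis using a b c by linarith
    qed
    also have "\<dots> \<le> k ^ (n + 1) * p" using n2 by (intro mult_le_mono1) simp
    finally have h2: "q < k ^ (n + 1) * p" .
    have mq: "r ^ n * m p \<le> m q" using it[OF p1, of n] mle[OF h1] by linarith
    have P: "0 < real p powr \<gamma>" using p1 by simp
    have Q: "0 < real q powr \<gamma>" using p1 pq by simp
    have "real q powr \<gamma> \<le> real (k ^ (n + 1) * p) powr \<gamma>"
    proof -
      have "real q \<le> real (k ^ (n + 1) * p)" using h2 by linarith
      thus ?thesis unfolding \<gamma>_def using bpos epos by (intro powr_mono2) auto
    qed
    also have "\<dots> = r ^ (n + 1) * real p powr \<gamma>"
      unfolding of_nat_mult of_nat_power powr_mult pow_powr[OF order.strict_trans[OF zero_less_one kpos]] kg r_def ..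
    finally have Qle: "real q powr \<gamma> \<le> r ^ (n + 1) * real p powr \<gamma>" .
    have "m p * real q powr \<gamma> \<le> m p * (r ^ (n + 1) * real p powr \<gamma>)"
      using Qle mpos[of p] by (intro mult_left_mono) auto
    also have "\<dots> = r * (r ^ n * m p) * real p powr \<gamma>" by (simp add: algebra_simps)
    also have "\<dots> \<le> r * m q * real p powr \<gamma>"
      using mq rpos P by (intro mult_right_mono mult_left_mono) auto
    finally have "m p * real q powr \<gamma> \<le> r * m q * real p powr \<gamma>" .
    thus "m p / real p powr (\<beta> + \<epsilon>) \<le> r * (m q / real q powr (\<beta> + \<epsilon>))"
      using P Q unfolding \<gamma>_def[symmetric] by (simp add: field_simps)
  qed
  thus C2 unfolding C2_def using epos by blast
qed

end

context mq begin

lemma ai_mult: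
  assumes K: "\<forall>p q. 1 \<le> p \<longrightarrow> p \<le> q \<longrightarrow> m p / real p powr \<gamma> \<le> K * (m q / real q powr \<gamma>)"
    and p: "1 \<le> p" and k: "1 \<le> k"
  shows "real k powr \<gamma> * m p \<le> K * m (k * p)"
proof -
  have "p \<le> k * p" using k by simp
  with K p have h: "m p / real p powr \<gamma> \<le> K * (m (k * p) / real (k * p) powr \<gamma>)" by blast
  have P: "0 < real p powr \<gamma>" using p by simp
  have Kk: "0 < real k powr \<gamma>" using k by simp
  have "real (k * p) powr \<gamma> = real k powr \<gamma> * real p powr \<gamma>" by (simp add: powr_mult)
  with h P Kk show ?thesis by (simp add: field_simps)
qed

definition "C4 \<equiv> ((\<lambda>k. Liminf sequentially (\<lambda>p. ereal (m (k * p) / (real k powr \<beta> * m p))))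
                 \<longlonglongrightarrow> PInfty)"
definition "C5 \<equiv> (\<exists>k::nat. k \<ge> 2 \<and>
                 Liminf sequentially (\<lambda>p. ereal (m (k * p) / m p)) > ereal (real k powr \<beta>))"

lemma c2_c4: assumes C2 shows C4
proof -
  obtain \<epsilon> K where e: "0 < \<epsilon>" and K0: "0 < K"
    and K: "\<forall>p q. 1 \<le> p \<longrightarrow> p \<le> q \<longrightarrow> m p / real p powr (\<beta> + \<epsilon>) \<le> K * (m q / real q powr (\<beta> + \<epsilon>))"
    using assms unfolding C2_def almost_increasing_def by blast
  have L: "ereal (real k powr \<epsilon> / K) \<le> Liminf sequentially (\<lambda>p. ereal (m (k * p) / (real k powr \<beta> * m p)))"
    if k: "1 \<le> k" for k
  proof (rule Liminf_bounded, unfold eventually_sequentially, intro exI allI impI)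
    fix p :: nat assume p: "1 \<le> p"
    have h: "real k powr (\<beta> + \<epsilon>) * m p \<le> K * m (k * p)" by (rule ai_mult[OF K p k])
    have kb: "0 < real k powr \<beta>" using k by simp
    have "real k powr (\<beta> + \<epsilon>) = real k powr \<beta> * real k powr \<epsilon>" by (simp add: powr_add)
    with h have "real k powr \<epsilon> / K \<le> m (k * p) / (real k powr \<beta> * m p)"
      using kb K0 mpos[of p] by (simp add: field_simps)
    thus "ereal (real k powr \<epsilon> / K) \<le> ereal (m (k * p) / (real k powr \<beta> * m p))" by simp
  qed
  show C4 unfolding C4_def PInfty_eq_infinity tendsto_PInfty
  proof
    fix r :: real
    obtain N where N: "\<forall>k\<ge>N. K * r < real k powr \<epsilon>" using arch_powr[OF e] by blast
    show "\<forall>\<^sub>F k in sequentially. ereal r < Liminf sequentially (\<lambda>p. ereal (m (k * p) / (real k powr \<beta> * m p)))"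
      unfolding eventually_sequentially
    proof (intro exI[of _ "max N 1"] allI impI)
      fix k assume "max N 1 \<le> k"
      hence k: "1 \<le> k" "N \<le> k" by auto
      have "r < real k powr \<epsilon> / K" using N k K0 by (simp add: field_simps)
      hence "ereal r < ereal (real k powr \<epsilon> / K)" by simp
      also note L[OF k(1)]
      finally show "ereal r < Liminf sequentially (\<lambda>p. ereal (m (k * p) / (real k powr \<beta> * m p)))" .
    qed
  qed
qed

lemma c4_c5: assumes C4 shows C5
proof -
  have "\<forall>\<^sub>F k in sequentially. ereal 1 < Liminf sequentially (\<lambda>p. ereal (m (k * p) / (real k powr \<beta> * m p)))"
    using assms unfolding C4_def PInfty_eq_infinity tendsto_PInfty by blast
  then obtain N where N: "\<forall>k\<ge>N. ereal 1 < Liminf sequentially (\<lambda>p. ereal (m (k * p) / (real k powr \<beta> * m p)))"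
    unfolding eventually_sequentially by blast
  define k where "k = max N 2"
  have k2: "2 \<le> k" and kN: "N \<le> k" unfolding k_def by auto
  from N kN have "ereal 1 < Liminf sequentially (\<lambda>p. ereal (m (k * p) / (real k powr \<beta> * m p)))" by blast
  then obtain z where z1: "ereal 1 < ereal z" and z2: "ereal z < Liminf sequentially (\<lambda>p. ereal (m (k * p) / (real k powr \<beta> * m p)))"
    using ereal_dense2 by blast
  have z1': "1 < z" using z1 by simp
  have "\<forall>\<^sub>F p in sequentially. ereal ((1 + z) / 2) < ereal (m (k * p) / (real k powr \<beta> * m p))"
  proof -
    have "ereal z \<le> Liminf sequentially (\<lambda>p. ereal (m (k * p) / (real k powr \<beta> * m p)))" using z2 by simp
    moreover have "ereal ((1 + z) / 2) < ereal z" using z1' by simp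
    ultimately show ?thesis unfolding le_Liminf_iff by blast
  qed
  then obtain P where P: "\<forall>p\<ge>P. (1 + z) / 2 < m (k * p) / (real k powr \<beta> * m p)"
    unfolding eventually_sequentially by auto
  have kb: "0 < real k powr \<beta>" using k2 by simp
  have "ereal ((1 + z) / 2 * real k powr \<beta>) \<le> Liminf sequentially (\<lambda>p. ereal (m (k * p) / m p))"
  proof (rule Liminf_bounded, unfold eventually_sequentially, intro exI[of _ P] allI impI)
    fix p assume "P \<le> p"
    with P have "(1 + z) / 2 < m (k * p) / (real k powr \<beta> * m p)" by blast
    hence "(1 + z) / 2 * real k powr \<beta> \<le> m (k * p) / m p"
      using kb mpos[of p] by (simp add: field_simps)
    thus "ereal ((1 + z) / 2 * real k powr \<beta>) \<le> ereal (m (k * p) / m p)" by simp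
  qed
  moreover have "real k powr \<beta> < (1 + z) / 2 * real k powr \<beta>" using kb z1' by simp
  hence "ereal (real k powr \<beta>) < ereal ((1 + z) / 2 * real k powr \<beta>)" by simp
  ultimately have "ereal (real k powr \<beta>) < Liminf sequentially (\<lambda>p. ereal (m (k * p) / m p))"
    by (rule order_less_le_trans[rotated])
  thus C5 unfolding C5_def using k2 by blast
qed

lemma c5_c6: assumes C5 shows C6
proof -
  obtain k :: nat where k2: "2 \<le> k" and L: "ereal (real k powr \<beta>) < Liminf sequentially (\<lambda>p. ereal (m (k * p) / m p))"
    using assms unfolding C5_def by blast
  define X where "X = real k powr \<beta>"
  have Xpos: "0 < X" unfolding X_def using k2 by simp
  obtain z where z1: "ereal X < ereal z" and z2: "ereal z < Liminf sequentially (\<lambda>p. ereal (m (k * p) / m p))"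
    using ereal_dense2[OF L] unfolding X_def by blast
  define z' where "z' = (X + z) / 2"
  have z'1: "X < z'" and z'2: "z' < z" using z1 unfolding z'_def by auto
  have "\<forall>\<^sub>F p in sequentially. ereal z' < ereal (m (k * p) / m p)"
  proof -
    have "ereal z \<le> Liminf sequentially (\<lambda>p. ereal (m (k * p) / m p))" using z2 by simp
    moreover have "ereal z' < ereal z" using z'2 by simp
    ultimately show ?thesis unfolding le_Liminf_iff by blast
  qed
  then obtain P where P: "\<forall>p\<ge>P. z' < m (k * p) / m p"
    unfolding eventually_sequentially by auto
  have step: "z' * m p \<le> m (k * p)" if "P \<le> p" for p
  proof -
    have "z' < m (k * p) / m p" using P that by blast
    thus ?thesis using mpos[of p] by (simp add: field_simps)
  qed
  have z'pos: "0 < z'" using z'1 Xpos by simp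
  have it: "z' ^ i * m p \<le> m (k ^ i * p)" if "P \<le> p" for p i
    using iter_growth[of P z' m k p i] step that z'pos k2 by auto
  define \<rho> where "\<rho> = z' / X"
  have rho: "1 < \<rho>" unfolding \<rho>_def using z'1 Xpos by simp
  define A where "A = 1 / z' ^ P"
  have A: "0 < A" unfolding A_def using z'pos by simp
  show C6
  proof (rule growth_c6[OF k2 A rho, of P])
    fix j p :: nat assume j: "P \<le> j" and p: "1 \<le> p"
    have kP: "P \<le> k ^ P * p"
    proof -
      have "P < 2 ^ P" by (rule less_exp)
      also have "\<dots> \<le> k ^ P" using k2 by (intro power_mono) auto
      also have "\<dots> \<le> k ^ P * p" using p by simp
      finally show ?thesis by simp
    qed
    have "z' ^ (j - P) * m (k ^ P * p) \<le> m (k ^ (j - P) * (k ^ P * p))" by (rule it[OF kP])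
    also have "k ^ (j - P) * (k ^ P * p) = k ^ j * p"
      using j by (simp add: mult.assoc[symmetric] power_add[symmetric])
    finally have h1: "z' ^ (j - P) * m (k ^ P * p) \<le> m (k ^ j * p)" .
    have "z' ^ (j - P) * m p \<le> z' ^ (j - P) * m (k ^ P * p)"
      using mle[of p "k ^ P * p"] p z'pos k2 by (intro mult_left_mono) auto
    with h1 have h2: "z' ^ (j - P) * m p \<le> m (k ^ j * p)" by linarith
    have "A * \<rho> ^ j * real (k ^ j) powr \<beta> = A * (\<rho> * X) ^ j"
    proof -
      have "(real k ^ j) powr \<beta> = (real k powr \<beta>) ^ j" using k2 by (intro pow_powr) simp
      thus ?thesis unfolding of_nat_power X_def by (simp add: power_mult_distrib)
    qed
    also have "\<dots> = z' ^ (j - P)"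
      unfolding A_def \<rho>_def using Xpos z'pos j by (simp add: power_diff)
    finally show "A * \<rho> ^ j * real (k ^ j) powr \<beta> * m p \<le> m (k ^ j * p)" using h2 by simp
  qed
qed

end

context mq begin

definition "C3 \<equiv> (\<exists>h. seq_equiv h m \<and> mono (\<lambda>p. (real p + 1) powr (- \<beta>) * h p) \<and>
                 (INF p\<in>{1..}. h (2 * p) / h p) > 2 powr \<beta>)"
definition "C8 \<equiv> Sup {ereal \<gamma> | \<gamma>. \<exists>l. seq_equiv l m \<and> mono (\<lambda>p. (real p + 1) powr (- \<gamma>) * l p)} > ereal \<beta>"

lemma c3_c6: assumes C3 shows C6
proof -
  obtain h c where c: "1 \<le> c" and hc: "\<forall>p. m p / c \<le> h p \<and> h p \<le> c * m p"
    and I: "(INF p\<in>{1..}. h (2 * p) / h p) > 2 powr \<beta>"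
    using assms unfolding C3_def seq_equiv_def by blast
  have hpos: "0 < h p" for p using hc mpos[of p] c
    by (metis divide_pos_pos less_le_trans order.strict_trans1 zero_less_one)
  define a where "a = (INF p\<in>{1..}. h (2 * p) / h p)"
  have bdd: "bdd_below ((\<lambda>p. h (2 * p) / h p) ` {1..})"
    by (rule bdd_belowI[of _ 0]) (auto intro: less_imp_le divide_pos_pos hpos)
  have ha: "a * h p \<le> h (2 * p)" if "1 \<le> p" for p
  proof -
    have "a \<le> h (2 * p) / h p" unfolding a_def using that by (intro cINF_lower[OF bdd]) auto
    thus ?thesis using hpos[of p] by (simp add: field_simps)
  qed
  have b2: "0 < 2 powr \<beta>" by simp
  have apos: "0 < a" using I b2 unfolding a_def by linarith
  have it: "a ^ j * h p \<le> h (2 ^ j * p)" if "1 \<le> p" for p j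
    using iter_growth[of 1 a h 2 p j] ha that apos by auto
  define \<rho> where "\<rho> = a / 2 powr \<beta>"
  have rho: "1 < \<rho>" unfolding \<rho>_def using I b2 unfolding a_def by simp
  have A: "0 < 1 / c^2" using c by simp
  show C6
  proof (rule growth_c6[of 2 "1 / c^2" \<rho> 0])
    fix j p :: nat assume p: "1 \<le> p"
    have e1: "\<rho> ^ j * real (2 ^ j) powr \<beta> = a ^ j"
    proof -
      have "real (2 ^ j) powr \<beta> = (2 powr \<beta>) ^ j" by (simp add: pow_powr)
      thus ?thesis unfolding \<rho>_def using b2 by (simp add: power_divide)
    qed
    have "m p \<le> c * h p" using hc c by (simp add: field_simps)
    hence "a ^ j * m p \<le> c * (a ^ j * h p)" using apos by (simp add: algebra_simps)
    also have "\<dots> \<le> c * h (2 ^ j * p)" using it[OF p] c by simp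
    also have "\<dots> \<le> c * (c * m (2 ^ j * p))" using hc c by (intro mult_left_mono) auto
    finally have "a ^ j * m p \<le> c^2 * m (2 ^ j * p)" by (simp add: power2_eq_square mult.assoc)
    hence "a ^ j * m p / c^2 \<le> m (2 ^ j * p)" using c by (simp add: field_simps)
    thus "1 / c^2 * \<rho> ^ j * real (2 ^ j) powr \<beta> * m p \<le> m (2 ^ j * p)"
      using e1 by (simp add: mult.assoc)
  qed (use A rho in auto)
qed

lemma K_ge1:
  assumes K: "\<forall>p q. 1 \<le> p \<longrightarrow> p \<le> q \<longrightarrow> m p / real p powr \<gamma> \<le> K * (m q / real q powr \<gamma>)"
  shows "1 \<le> K"
proof -
  have "m 1 \<le> K * m 1" using K[rule_format, of 1 1] by simp
  thus ?thesis using mpos[of 1] by simp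
qed

lemma shift_bound:
  assumes "0 \<le> \<gamma>" "1 \<le> q"
  shows "m q / real q powr \<gamma> \<le> 2 powr \<gamma> * (m q / (real q + 1) powr \<gamma>)"
proof -
  have "(real q + 1) powr \<gamma> \<le> (2 * real q) powr \<gamma>" using assms by (intro powr_mono2) auto
  also have "\<dots> = 2 powr \<gamma> * real q powr \<gamma>" by (rule powr_mult; simp)
  finally have h: "(real q + 1) powr \<gamma> \<le> 2 powr \<gamma> * real q powr \<gamma>" .
  have "0 < real q powr \<gamma>" "0 < (real q + 1) powr \<gamma>" using assms by auto
  thus ?thesis using h mpos[of q] by (simp add: field_simps mult_left_mono)
qed

lemma ai_shift:
  assumes g: "0 \<le> \<gamma>"
    and K: "\<forall>p q. 1 \<le> p \<longrightarrow> p \<le> q \<longrightarrow> m p / real p powr \<gamma> \<le> K * (m q / real q powr \<gamma>)"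
  shows "\<And>p q. p \<le> q \<Longrightarrow> m p / (real p + 1) powr \<gamma> \<le> (2 powr \<gamma> * K) * (m q / (real q + 1) powr \<gamma>)"
proof -
  fix p q :: nat assume pq: "p \<le> q"
  have K1: "1 \<le> K" by (rule K_ge1[OF K])
  have g1: "1 \<le> 2 powr \<gamma>" using g by (simp add: ge_one_powr_ge_zero)
  have Q0: "0 < m q / (real q + 1) powr \<gamma>" using mpos[of q] by simp
  show "m p / (real p + 1) powr \<gamma> \<le> (2 powr \<gamma> * K) * (m q / (real q + 1) powr \<gamma>)"
  proof (cases "q = 0")
    case True
    with pq have "p = 0" by simp
    have "1 * 1 \<le> 2 powr \<gamma> * K" using g1 K1 by (intro mult_mono) auto
    thus ?thesis using True \<open>p = 0\<close> mpos[of 0] by simp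
  next
    case False
    hence q1: "1 \<le> q" by simp
    have "m p / (real p + 1) powr \<gamma> \<le> K * (m q / real q powr \<gamma>)"
    proof (cases "p = 0")
      case True
      have "m 0 \<le> m 1" by (rule mle) simp
      also have "m 1 = m 1 / real 1 powr \<gamma>" by simp
      also have "\<dots> \<le> K * (m q / real q powr \<gamma>)" using K q1 by blast
      finally show ?thesis using True by simp
    next
      case False
      hence p1: "1 \<le> p" by simp
      have "(real p) powr \<gamma> \<le> (real p + 1) powr \<gamma>" using g by (intro powr_mono2) auto
      hence "m p / (real p + 1) powr \<gamma> \<le> m p / real p powr \<gamma>"
        using p1 mpos[of p] by (intro divide_left_mono) auto
      also have "\<dots> \<le> K * (m q / real q powr \<gamma>)" using K p1 pq by blast
      finally show ?thesis .
    qed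
    also have "\<dots> \<le> K * (2 powr \<gamma> * (m q / (real q + 1) powr \<gamma>))"
      using shift_bound[OF g q1] K1 by (intro mult_left_mono) auto
    finally show ?thesis by (simp add: mult.assoc mult.left_commute)
  qed
qed

end

context mq begin

lemma c8_c2: assumes C8 shows C2
proof -
  obtain \<gamma> l where g: "\<beta> < \<gamma>" and l: "seq_equiv l m" and mo: "mono (\<lambda>p. (real p + 1) powr (- \<gamma>) * l p)"
    using assms unfolding C8_def less_Sup_iff by auto
  obtain c where c: "1 \<le> c" and lc: "\<forall>p. m p / c \<le> l p \<and> l p \<le> c * m p"
    using l unfolding seq_equiv_def by blast
  have g0: "0 \<le> \<gamma>" using g bpos by simp
  have "almost_increasing (\<lambda>p. m p / real p powr (\<beta> + (\<gamma> - \<beta>)))"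
    unfolding almost_increasing_def
  proof (intro exI[of _ "2 powr \<gamma> * c^2"] conjI allI impI)
    show "0 < 2 powr \<gamma> * c^2" using c by simp
    fix p q :: nat assume p1: "1 \<le> p" and pq: "p \<le> q"
    have q1: "1 \<le> q" using p1 pq by simp
    have e: "\<beta> + (\<gamma> - \<beta>) = \<gamma>" by simp
    have P: "0 < (real p + 1) powr \<gamma>" "0 < (real q + 1) powr \<gamma>" by auto
    have "(real p + 1) powr (- \<gamma>) * l p \<le> (real q + 1) powr (- \<gamma>) * l q"
      using mo pq unfolding mono_def by blast
    hence mon: "l p / (real p + 1) powr \<gamma> \<le> l q / (real q + 1) powr \<gamma>"
      by (simp add: powr_minus divide_inverse mult.commute)
    have mp: "m p \<le> c * l p" using lc c by (simp add: field_simps)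
    have lq: "l q \<le> c * m q" using lc by blast
    have "m p / real p powr \<gamma> \<le> 2 powr \<gamma> * (m p / (real p + 1) powr \<gamma>)" by (rule shift_bound[OF g0 p1])
    also have "m p / (real p + 1) powr \<gamma> \<le> c * (l p / (real p + 1) powr \<gamma>)"
      using mp P by (simp add: divide_right_mono)
    also have "\<dots> \<le> c * (l q / (real q + 1) powr \<gamma>)" using mon c by (intro mult_left_mono) auto
    also have "\<dots> \<le> c * (c * m q / (real q + 1) powr \<gamma>)"
      using lq P c by (intro mult_left_mono divide_right_mono) auto
    also have "\<dots> \<le> c * (c * m q / real q powr \<gamma>)"
    proof -
      have "real q powr \<gamma> \<le> (real q + 1) powr \<gamma>" using g0 by (intro powr_mono2) auto
      hence "c * m q / (real q + 1) powr \<gamma> \<le> c * m q / real q powr \<gamma>"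
        using q1 c mpos[of q] by (intro divide_left_mono) auto
      thus ?thesis using c by (intro mult_left_mono) auto
    qed
    finally show "m p / real p powr (\<beta> + (\<gamma> - \<beta>)) \<le> 2 powr \<gamma> * c^2 * (m q / real q powr (\<beta> + (\<gamma> - \<beta>)))"
      unfolding e by (simp add: power2_eq_square mult_ac)
  qed
  thus C2 unfolding C2_def using g by (intro exI[of _ "\<gamma> - \<beta>"]) auto
qed

lemma c2_c8: assumes C2 shows C8
proof -
  obtain \<epsilon> K where e: "0 < \<epsilon>"
    and K: "\<forall>p q. 1 \<le> p \<longrightarrow> p \<le> q \<longrightarrow> m p / real p powr (\<beta> + \<epsilon>) \<le> K * (m q / real q powr (\<beta> + \<epsilon>))"
    using assms unfolding C2_def almost_increasing_def by blast
  define \<gamma> where "\<gamma> = \<beta> + \<epsilon>"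
  have g0: "0 \<le> \<gamma>" unfolding \<gamma>_def using e bpos by simp
  define a where "a = (\<lambda>q. m q / (real q + 1) powr \<gamma>)"
  define S where "S = (\<lambda>p. Max (a ` {..p}))"
  have apos: "\<And>p. 0 < a p" unfolding a_def using mpos by simp
  have ai: "\<And>p q. p \<le> q \<Longrightarrow> a p \<le> (2 powr \<gamma> * K) * a q"
    unfolding a_def by (rule ai_shift[OF g0 K[folded \<gamma>_def]])
  have MC1: "\<And>p. a p \<le> S p" unfolding S_def by (rule max_constr(1)[OF apos ai])
  have MC2: "\<And>p. S p \<le> (2 powr \<gamma> * K) * a p" unfolding S_def by (rule max_constr(2)[OF apos ai])
  have MC3: "mono S" unfolding S_def using max_constr(3)[OF apos ai] by simp
  have K1: "1 \<le> 2 powr \<gamma> * K"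
  proof -
    have "1 \<le> 2 powr \<gamma>" using g0 by (simp add: ge_one_powr_ge_zero)
    moreover have "1 \<le> K" by (rule K_ge1[OF K[folded \<gamma>_def]])
    ultimately have "1 * 1 \<le> 2 powr \<gamma> * K" by (intro mult_mono) auto
    thus ?thesis by simp
  qed
  define l where "l = (\<lambda>p. (real p + 1) powr \<gamma> * S p)"
  have "seq_equiv l m" unfolding seq_equiv_def
  proof (intro exI[of _ "2 powr \<gamma> * K"] conjI allI)
    show "1 \<le> 2 powr \<gamma> * K" by (fact K1)
    fix p
    have P: "0 < (real p + 1) powr \<gamma>" by simp
    have "m p = (real p + 1) powr \<gamma> * a p" unfolding a_def using P by simp
    also have "\<dots> \<le> l p" unfolding l_def using MC1[of p] P by (intro mult_left_mono) auto
    finally have ml: "m p \<le> l p" .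
    show "m p / (2 powr \<gamma> * K) \<le> l p"
    proof -
      have "m p / (2 powr \<gamma> * K) \<le> m p / 1"
        using K1 mpos[of p] by (intro divide_left_mono) auto
      thus ?thesis using ml by simp
    qed
    have "l p \<le> (real p + 1) powr \<gamma> * ((2 powr \<gamma> * K) * a p)"
      unfolding l_def using MC2[of p] P by (intro mult_left_mono) auto
    also have "\<dots> = (2 powr \<gamma> * K) * m p" unfolding a_def using P by simp
    finally show "l p \<le> (2 powr \<gamma> * K) * m p" .
  qed
  moreover have "mono (\<lambda>p. (real p + 1) powr (- \<gamma>) * l p)"
  proof -
    have "(\<lambda>p. (real p + 1) powr (- \<gamma>) * l p) = S"
      unfolding l_def by (auto simp: powr_minus)
    thus ?thesis using MC3 by simp
  qed
  ultimately have "ereal \<gamma> \<in> {ereal \<gamma> | \<gamma>. \<exists>l. seq_equiv l m \<and> mono (\<lambda>p. (real p + 1) powr (- \<gamma>) * l p)}"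
    by blast
  hence "ereal \<gamma> \<le> Sup {ereal \<gamma> | \<gamma>. \<exists>l. seq_equiv l m \<and> mono (\<lambda>p. (real p + 1) powr (- \<gamma>) * l p)}"
    by (rule Sup_upper)
  moreover have "ereal \<beta> < ereal \<gamma>" unfolding \<gamma>_def using e by simp
  ultimately show C8 unfolding C8_def by (rule order_less_le_trans[rotated])
qed

end

context mq begin

lemma c2_c3: assumes C2 shows C3
proof -
  obtain \<epsilon> K where e: "0 < \<epsilon>"
    and K: "\<forall>p q. 1 \<le> p \<longrightarrow> p \<le> q \<longrightarrow> m p / real p powr (\<beta> + \<epsilon>) \<le> K * (m q / real q powr (\<beta> + \<epsilon>))"
    using assms unfolding C2_def almost_increasing_def by blast
  define \<gamma> where "\<gamma> = \<beta> + \<epsilon>"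
  note K = K[folded \<gamma>_def]
  have K1: "1 \<le> K" by (rule K_ge1[OF K])
  have b1: "1 \<le> 2 powr \<beta>" using bpos by (simp add: ge_one_powr_ge_zero)
  define K' where "K' = 2 powr \<beta> * K"
  have K'1: "1 \<le> K'" unfolding K'_def using mult_mono[OF b1 K1] by simp
  have KK': "K \<le> K'" unfolding K'_def using b1 K1 by (simp add: mult_le_cancel_right1)
  define w where "w = (\<lambda>p::nat. if p = 0 then 2 powr (- \<beta>) else real p powr \<gamma>)"
  have wpos: "\<And>p. 0 < w p" unfolding w_def by auto
  define a where "a = (\<lambda>q. m q / w q)"
  have apos: "\<And>p. 0 < a p" unfolding a_def using mpos wpos by simp
  have ai: "a p \<le> K' * a q" if pq: "p \<le> q" for p q
  proof (cases "q = 0")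
    case True
    with pq have "p = 0" by simp
    thus ?thesis using True K'1 apos[of 0] by simp
  next
    case False
    hence q1: "1 \<le> q" by simp
    show ?thesis
    proof (cases "p = 0")
      case True
      have "m 0 \<le> m 1" by (rule mle) simp
      also have "m 1 = m 1 / real 1 powr \<gamma>" by simp
      also have "\<dots> \<le> K * (m q / real q powr \<gamma>)" using K q1 by blast
      finally have "m 0 \<le> K * a q" unfolding a_def w_def using q1 by simp
      hence "2 powr \<beta> * m 0 \<le> 2 powr \<beta> * (K * a q)" by simp
      thus ?thesis unfolding a_def w_def K'_def using True
        by (simp add: powr_minus divide_inverse mult_ac a_def w_def)
    next
      case False
      hence p1: "1 \<le> p" by simp
      have "a p \<le> K * a q" unfolding a_def w_def using K p1 pq q1 by auto
      also have "\<dots> \<le> K' * a q" using KK' apos[of q] by (intro mult_right_mono) auto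
      finally show ?thesis .
    qed
  qed
  define S where "S = (\<lambda>p. Max (a ` {..p}))"
  have MC1: "\<And>p. a p \<le> S p" unfolding S_def by (rule max_constr(1)[OF apos ai])
  have MC2: "\<And>p. S p \<le> K' * a p" unfolding S_def by (rule max_constr(2)[OF apos ai])
  have MC3: "mono S" unfolding S_def using max_constr(3)[OF apos ai] by simp
  have MC4: "\<And>p. 0 < S p" unfolding S_def by (rule max_constr(4)[OF apos ai])
  define h where "h = (\<lambda>p. w p * S p)"
  have hpos: "\<And>p. 0 < h p" unfolding h_def using wpos MC4 by simp
  have "seq_equiv h m" unfolding seq_equiv_def
  proof (intro exI[of _ K'] conjI allI)
    show "1 \<le> K'" by (fact K'1)
    fix p
    have "m p = w p * a p" unfolding a_def using wpos[of p] by simp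
    also have "\<dots> \<le> h p" unfolding h_def using MC1[of p] wpos[of p] by (intro mult_left_mono) auto
    finally have ml: "m p \<le> h p" .
    have "m p / K' \<le> m p / 1" using K'1 mpos[of p] by (intro divide_left_mono) auto
    thus "m p / K' \<le> h p" using ml by simp
    have "h p \<le> w p * (K' * a p)" unfolding h_def using MC2[of p] wpos[of p] by (intro mult_left_mono) auto
    also have "\<dots> = K' * m p" unfolding a_def using wpos[of p] by simp
    finally show "h p \<le> K' * m p" .
  qed
  moreover have "mono (\<lambda>p. (real p + 1) powr (- \<beta>) * h p)"
  proof -
    define g where "g = (\<lambda>p. (real p + 1) powr (- \<beta>) * w p)"
    have gpos: "\<And>p. 0 \<le> g p" unfolding g_def using wpos by (simp add: less_imp_le)
    have gn: "g n = (real n / (real n + 1)) powr \<beta> * real n powr \<epsilon>" if "1 \<le> n" for n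
    proof -
      have d: "(real n / (real n + 1)) powr \<beta> = real n powr \<beta> / (real n + 1) powr \<beta>"
        by (rule powr_divide)
      show ?thesis unfolding g_def w_def \<gamma>_def d using that
        by (simp add: powr_add powr_minus field_simps)
    qed
    have gm: "mono g"
    proof (rule incseq_SucI)
      fix n
      show "g n \<le> g (Suc n)"
      proof (cases "n = 0")
        case True
        thus ?thesis unfolding g_def w_def by simp
      next
        case False
        hence n1: "1 \<le> n" by simp
        have fr: "real n / (real n + 1) \<le> real (Suc n) / (real (Suc n) + 1)"
          by (simp add: field_simps)
        have "(real n / (real n + 1)) powr \<beta> \<le> (real (Suc n) / (real (Suc n) + 1)) powr \<beta>"
          using fr bpos by (intro powr_mono2) auto
        moreover have "real n powr \<epsilon> \<le> real (Suc n) powr \<epsilon>" using e by (intro powr_mono2) auto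
        ultimately have "(real n / (real n + 1)) powr \<beta> * real n powr \<epsilon>
            \<le> (real (Suc n) / (real (Suc n) + 1)) powr \<beta> * real (Suc n) powr \<epsilon>"
          by (intro mult_mono) auto
        thus ?thesis using gn[OF n1] gn[of "Suc n"] by simp
      qed
    qed
    have "(\<lambda>p. (real p + 1) powr (- \<beta>) * h p) = (\<lambda>p. g p * S p)"
      unfolding g_def h_def by (simp add: mult.assoc)
    moreover have "mono (\<lambda>p. g p * S p)"
      unfolding mono_def
    proof (intro allI impI)
      fix p q :: nat assume "p \<le> q"
      thus "g p * S p \<le> g q * S q"
        using gm MC3 gpos MC4 unfolding mono_def by (intro mult_mono) (auto intro: less_imp_le)
    qed
    ultimately show ?thesis by simp
  qed
  moreover have "(INF p\<in>{1..}. h (2 * p) / h p) > 2 powr \<beta>"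
  proof -
    have "2 powr \<gamma> \<le> (INF p\<in>{1..}. h (2 * p) / h p)"
    proof (rule cINF_greatest)
      show "{1::nat..} \<noteq> {}" by auto
      fix p :: nat assume "p \<in> {1..}"
      hence p1: "1 \<le> p" by simp
      have w2: "w (2 * p) = 2 powr \<gamma> * w p" unfolding w_def using p1 by (simp add: powr_mult)
      have "S p \<le> S (2 * p)" using MC3 unfolding mono_def by simp
      hence r: "1 \<le> S (2 * p) / S p" using MC4[of p] by simp
      have "h (2 * p) / h p = 2 powr \<gamma> * (S (2 * p) / S p)"
        unfolding h_def w2 using wpos[of p] MC4[of p] by (simp add: field_simps)
      also have "\<dots> \<ge> 2 powr \<gamma> * 1" using r by (intro mult_left_mono) auto
      finally show "2 powr \<gamma> \<le> h (2 * p) / h p" by simp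
    qed
    moreover have "2 powr \<beta> < 2 powr \<gamma>" unfolding \<gamma>_def using e by (intro powr_less_mono) auto
    ultimately show ?thesis by linarith
  qed
  ultimately show C3 unfolding C3_def by blast
qed

end

context mq begin

definition "C7 \<equiv> (beta_index m > ereal \<beta>)"

lemma fval: "m (nat \<lfloor>real n\<rfloor> - 1) = m (n - 1)" by simp

lemma c2_c7: assumes C2 shows C7
proof -
  obtain \<epsilon> K where e: "0 < \<epsilon>" and K0: "0 < K"
    and K: "\<forall>p q. 1 \<le> p \<longrightarrow> p \<le> q \<longrightarrow> m p / real p powr (\<beta> + \<epsilon>) \<le> K * (m q / real q powr (\<beta> + \<epsilon>))"
    using assms unfolding C2_def almost_increasing_def by blast
  define \<gamma> where "\<gamma> = \<beta> + \<epsilon>"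
  note K = K[folded \<gamma>_def]
  have g0: "0 \<le> \<gamma>" unfolding \<gamma>_def using e bpos by simp
  define f where "f = (\<lambda>x::real. m (nat \<lfloor>x\<rfloor> - 1))"
  define D where "D = 1 / (K * 3 powr \<gamma>)"
  have D0: "0 < D" unfolding D_def using K0 by simp
  have key: "D \<le> f (t * x) / (t powr \<gamma> * f x)" if x2: "2 \<le> x" and t1: "1 \<le> t" for x t
  proof -
    define n where "n = nat \<lfloor>x\<rfloor>"
    define n' where "n' = nat \<lfloor>t * x\<rfloor>"
    have txx: "x \<le> t * x" using x2 t1 by (simp add: mult_le_cancel_right1)
    have n2: "2 \<le> n" unfolding n_def using x2 by linarith
    have nn': "n \<le> n'" unfolding n_def n'_def using txx by (simp add: floor_mono nat_mono)
    have nx: "real n \<le> x" "x < real n + 1" unfolding n_def using x2 by linarith+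
    have nx': "t * x < real n' + 1" unfolding n'_def using x2 t1 txx by linarith
    define p where "p = n - 1"
    define q where "q = n' - 1"
    have p1: "1 \<le> p" and pq: "p \<le> q" unfolding p_def q_def using n2 nn' by auto
    have rp: "real p = real n - 1" and rq: "real q = real n' - 1" unfolding p_def q_def using n2 nn' by auto
    have fx: "f x = m p" unfolding f_def p_def n_def ..
    have ftx: "f (t * x) = m q" unfolding f_def q_def n'_def ..
    have Kpq: "m p / real p powr \<gamma> \<le> K * (m q / real q powr \<gamma>)" using K p1 pq by blast
    have tle: "t \<le> 3 * real q / real p"
    proof -
      have "t * x < 3 * real q" using nx' rq p1 pq by linarith
      moreover have "real p < x" using nx rp by linarith
      ultimately have "t * real p < 3 * real q"
        using t1 p1 by (smt (verit) mult_left_mono of_nat_0_le_iff)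
      thus ?thesis using p1 by (simp add: field_simps)
    qed
    have "t powr \<gamma> \<le> (3 * real q / real p) powr \<gamma>" using tle t1 g0 by (intro powr_mono2) auto
    also have "\<dots> = 3 powr \<gamma> * real q powr \<gamma> / real p powr \<gamma>"
      by (simp add: powr_divide powr_mult)
    finally have tg: "t powr \<gamma> \<le> 3 powr \<gamma> * real q powr \<gamma> / real p powr \<gamma>" .
    have P: "0 < real p powr \<gamma>" "0 < real q powr \<gamma>" using p1 pq by auto
    have Kpq': "m p * real q powr \<gamma> \<le> K * m q * real p powr \<gamma>"
      using Kpq P by (simp add: field_simps)
    have tpos: "0 < t powr \<gamma>" using t1 by simp
    have "D * (t powr \<gamma> * m p) \<le> D * (3 powr \<gamma> * real q powr \<gamma> / real p powr \<gamma> * m p)"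
      using tg D0 mpos[of p] by (intro mult_left_mono mult_right_mono) auto
    also have "\<dots> = (m p * real q powr \<gamma>) / (K * real p powr \<gamma>)"
      unfolding D_def using P K0 by (simp add: field_simps)
    also have "\<dots> \<le> (K * m q * real p powr \<gamma>) / (K * real p powr \<gamma>)"
      using Kpq' P K0 by (intro divide_right_mono) auto
    also have "\<dots> = m q" using P K0 by simp
    finally have "D * (t powr \<gamma> * m p) \<le> m q" .
    thus ?thesis unfolding fx ftx using tpos mpos[of p] by (simp add: field_simps)
  qed
  have mem: "ereal \<gamma> \<in> {ereal b | b. \<exists>D>0. \<forall>\<Lambda>>1.
      Liminf at_top (\<lambda>x. ereal (INF t\<in>{1..\<Lambda>}. f (t * x) / (t powr b * f x))) \<ge> ereal D}"
  proof (intro CollectI exI conjI allI impI)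
    show "ereal \<gamma> = ereal \<gamma>" ..
    show "0 < D" by (fact D0)
    fix \<Lambda> :: real assume L: "1 < \<Lambda>"
    show "ereal D \<le> Liminf at_top (\<lambda>x. ereal (INF t\<in>{1..\<Lambda>}. f (t * x) / (t powr \<gamma> * f x)))"
    proof (rule Liminf_bounded)
      show "\<forall>\<^sub>F x in at_top. ereal D \<le> ereal (INF t\<in>{1..\<Lambda>}. f (t * x) / (t powr \<gamma> * f x))"
        using eventually_ge_at_top[of "2::real"]
      proof eventually_elim
        case (elim x)
        have "D \<le> (INF t\<in>{1..\<Lambda>}. f (t * x) / (t powr \<gamma> * f x))"
          using L key[OF elim] by (intro cINF_greatest) auto
        thus ?case by simp
      qed
    qed
  qed
  hence "ereal \<gamma> \<le> beta_index m"
    unfolding beta_index_def lower_matuszewska_def f_def by (rule Sup_upper)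
  moreover have "ereal \<beta> < ereal \<gamma>" unfolding \<gamma>_def using e by simp
  ultimately show C7 unfolding C7_def by (rule order_less_le_trans[rotated])
qed

end

context mq begin

lemma c7_c5: assumes C7 shows C5
proof -
  define f where "f = (\<lambda>x::real. m (nat \<lfloor>x\<rfloor> - 1))"
  have fpos: "\<And>x. 0 < f x" unfolding f_def using mpos by simp
  obtain b D where bb: "\<beta> < b" and D0: "0 < D"
    and L: "\<forall>\<Lambda>>1. Liminf at_top (\<lambda>x. ereal (INF t\<in>{1..\<Lambda>}. f (t * x) / (t powr b * f x))) \<ge> ereal D"
    using assms unfolding C7_def beta_index_def lower_matuszewska_def less_Sup_iff f_def[symmetric]
    by auto
  define c where "c = D / 2"
  have c0: "0 < c" unfolding c_def using D0 by simp
  obtain N where N: "\<forall>k\<ge>N. 2 powr \<beta> / c < real k powr (b - \<beta>)"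
    using arch_powr[of "b - \<beta>" "2 powr \<beta> / c"] bb by auto
  define k where "k = max N 2"
  have k2: "2 \<le> k" and kN: "N \<le> k" unfolding k_def by auto
  have kb: "2 powr \<beta> / c < real k powr (b - \<beta>)" using N kN by blast
  have kpos: "0 < real k" using k2 by simp
  have big: "real (2 * k) powr \<beta> < c * real k powr b"
  proof -
    have "real (2 * k) powr \<beta> = 2 powr \<beta> * real k powr \<beta>" by (simp add: powr_mult)
    also have "\<dots> < c * real k powr (b - \<beta>) * real k powr \<beta>"
      using kb c0 kpos by (simp add: field_simps)
    also have "\<dots> = c * real k powr b" by (simp add: powr_diff kpos)
    finally show ?thesis .
  qed
  have "ereal D \<le> Liminf at_top (\<lambda>x. ereal (INF t\<in>{1..real k}. f (t * x) / (t powr b * f x)))"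
    using L k2 by auto
  moreover have "ereal c < ereal D" unfolding c_def using D0 by simp
  ultimately have ev: "\<forall>\<^sub>F x in at_top. ereal c < ereal (INF t\<in>{1..real k}. f (t * x) / (t powr b * f x))"
    unfolding le_Liminf_iff by blast
  then obtain X0 where X0: "\<forall>x\<ge>X0. c < (INF t\<in>{1..real k}. f (t * x) / (t powr b * f x))"
    unfolding eventually_at_top_linorder by auto
  define P0 where "P0 = max 1 (nat \<lceil>X0\<rceil>)"
  have step: "c * real k powr b \<le> m (2 * k * p) / m p" if p: "P0 \<le> p" for p
  proof -
    have p1: "1 \<le> p" using p unfolding P0_def by simp
    have "X0 \<le> real p + 1" using p unfolding P0_def by linarith
    with X0 have c1: "c < (INF t\<in>{1..real k}. f (t * (real p + 1)) / (t powr b * f (real p + 1)))" by blast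
    have bdd: "bdd_below ((\<lambda>t. f (t * (real p + 1)) / (t powr b * f (real p + 1))) ` {1..real k})"
    proof (rule bdd_belowI[of _ 0])
      fix y assume "y \<in> (\<lambda>t. f (t * (real p + 1)) / (t powr b * f (real p + 1))) ` {1..real k}"
      then obtain t where t: "1 \<le> t" and y: "y = f (t * (real p + 1)) / (t powr b * f (real p + 1))" by auto
      have "0 < t powr b * f (real p + 1)" using t fpos by simp
      thus "0 \<le> y" unfolding y using fpos[of "t * (real p + 1)"] by simp
    qed
    have "(INF t\<in>{1..real k}. f (t * (real p + 1)) / (t powr b * f (real p + 1)))
        \<le> f (real k * (real p + 1)) / (real k powr b * f (real p + 1))"
      using k2 by (intro cINF_lower[OF bdd]) auto
    also have "f (real k * (real p + 1)) = m (k * p + k - 1)"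
    proof -
      have e: "real k * (real p + 1) = real (k * (p + 1))" by (simp add: algebra_simps)
      have "k * (p + 1) - 1 = k * p + k - 1" by (simp add: algebra_simps)
      thus ?thesis unfolding f_def e fval by simp
    qed
    also have fp: "f (real p + 1) = m p"
    proof -
      have e: "real p + 1 = real (p + 1)" by simp
      show ?thesis unfolding f_def e fval by simp
    qed
    finally have "c < m (k * p + k - 1) / (real k powr b * m p)" using c1 unfolding fp by linarith
    hence "c * real k powr b * m p < m (k * p + k - 1)"
      using kpos mpos[of p] by (simp add: field_simps)
    also have "m (k * p + k - 1) \<le> m (2 * k * p)"
    proof (rule mle)
      have "k \<le> k * p" using p1 by simp
      moreover have "2 * k * p = k * p + k * p" by simp
      ultimately show "k * p + k - 1 \<le> 2 * k * p" by linarith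
    qed
    finally show ?thesis using mpos[of p] by (simp add: field_simps)
  qed
  have "ereal (c * real k powr b) \<le> Liminf sequentially (\<lambda>p. ereal (m (2 * k * p) / m p))"
    by (rule Liminf_bounded) (use step in \<open>auto simp: eventually_sequentially\<close>)
  moreover have "ereal (real (2 * k) powr \<beta>) < ereal (c * real k powr b)" using big by simp
  ultimately have "ereal (real (2 * k) powr \<beta>) < Liminf sequentially (\<lambda>p. ereal (m (2 * k * p) / m p))"
    by (rule order_less_le_trans[rotated])
  moreover have "2 \<le> 2 * k" using k2 by simp
  ultimately show C5 unfolding C5_def by blast
qed

end

context mq begin

definition "C9 \<equiv> (\<exists>C>0. \<forall>p. (\<Sum>k\<le>p. m k / (real k + 1) powr (1 + \<beta>))
                 \<le> C * m p / (real p + 1) powr \<beta>)"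

lemma dyadic_c6:
  assumes A: "0 < A" and rho: "1 < \<rho>"
    and g: "\<And>j p. 1 \<le> p \<Longrightarrow> A * \<rho> ^ j * real (2 ^ (j + 1)) powr \<beta> * m p \<le> m (2 ^ (j + 1) * p)"
  shows C6
proof (rule growth_c6[of 2 "A / \<rho>" \<rho> 1])
  fix j p :: nat assume j: "1 \<le> j" and p: "1 \<le> p"
  obtain i where i: "j = i + 1" using j by (metis add.commute le_Suc_ex)
  have "A / \<rho> * \<rho> ^ j = A * \<rho> ^ i" unfolding i using rho by simp
  thus "A / \<rho> * \<rho> ^ j * real (2 ^ j) powr \<beta> * m p \<le> m (2 ^ j * p)"
    using g[OF p, of i] unfolding i by simp
qed (use A rho in auto)

lemma ai_shrink:
  assumes K: "\<forall>p q. 1 \<le> p \<longrightarrow> p \<le> q \<longrightarrow> m p / real p powr (\<beta> + \<epsilon>) \<le> K * (m q / real q powr (\<beta> + \<epsilon>))"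
    and e': "e' \<le> \<epsilon>"
  shows "\<forall>p q. 1 \<le> p \<longrightarrow> p \<le> q \<longrightarrow> m p / real p powr (\<beta> + e') \<le> K * (m q / real q powr (\<beta> + e'))"
proof (intro allI impI)
  fix p q :: nat assume p1: "1 \<le> p" and pq: "p \<le> q"
  have K1: "1 \<le> K" by (rule K_ge1[OF K])
  have x: "real n powr (\<beta> + e') = real n powr (\<beta> + \<epsilon>) / real n powr (\<epsilon> - e')" for n
    by (simp add: powr_diff[symmetric])
  have pe: "real p powr (\<epsilon> - e') \<le> real q powr (\<epsilon> - e')" using e' pq by (intro powr_mono2) auto
  have "m p / real p powr (\<beta> + e') = (m p / real p powr (\<beta> + \<epsilon>)) * real p powr (\<epsilon> - e')"
    unfolding x by simp
  also have "\<dots> \<le> (K * (m q / real q powr (\<beta> + \<epsilon>))) * real q powr (\<epsilon> - e')"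
    using K p1 pq pe K1 mpos[of q] by (intro mult_mono) auto
  also have "\<dots> = K * (m q / real q powr (\<beta> + e'))" unfolding x by simp
  finally show "m p / real p powr (\<beta> + e') \<le> K * (m q / real q powr (\<beta> + e'))" .
qed

lemma c2_c9: assumes C2 shows C9
proof -
  obtain \<epsilon> K where e: "0 < \<epsilon>"
    and K: "\<forall>p q. 1 \<le> p \<longrightarrow> p \<le> q \<longrightarrow> m p / real p powr (\<beta> + \<epsilon>) \<le> K * (m q / real q powr (\<beta> + \<epsilon>))"
    using assms unfolding C2_def almost_increasing_def by blast
  define e' where "e' = min \<epsilon> 1"
  have e'0: "0 < e'" "e' \<le> 1" unfolding e'_def using e by auto
  note K' = ai_shrink[OF K, of e'] 
  have K': "\<forall>p q. 1 \<le> p \<longrightarrow> p \<le> q \<longrightarrow> m p / real p powr (\<beta> + e') \<le> K * (m q / real q powr (\<beta> + e'))"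
    using K' unfolding e'_def by simp
  define \<gamma> where "\<gamma> = \<beta> + e'"
  have g0: "0 \<le> \<gamma>" unfolding \<gamma>_def using e'0 bpos by simp
  define a where "a = (\<lambda>q. m q / (real q + 1) powr \<gamma>)"
  have ai: "\<And>p q. p \<le> q \<Longrightarrow> a p \<le> (2 powr \<gamma> * K) * a q"
    unfolding a_def by (rule ai_shift[OF g0 K'[folded \<gamma>_def]])
  have K1: "1 \<le> K" by (rule K_ge1[OF K])
  define C where "C = 2 powr \<gamma> * K / e'"
  have C0: "0 < C" unfolding C_def using K1 e'0 by simp
  have tm: "m k / (real k + 1) powr (1 + \<beta>) = a k * (real k + 1) powr (e' - 1)" for k
  proof -
    have "(real k + 1) powr (1 + \<beta>) * (real k + 1) powr (e' - 1) = (real k + 1) powr \<gamma>"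
      unfolding \<gamma>_def by (simp add: powr_add[symmetric])
    moreover have "0 < (real k + 1) powr (1 + \<beta>)" "0 < (real k + 1) powr \<gamma>" by auto
    ultimately show ?thesis unfolding a_def by (simp add: field_simps)
  qed
  show C9 unfolding C9_def
  proof (intro exI[of _ C] conjI allI)
    show "0 < C" by (fact C0)
    fix p
    have "(\<Sum>k\<le>p. m k / (real k + 1) powr (1 + \<beta>)) = (\<Sum>k\<le>p. a k * (real k + 1) powr (e' - 1))"
      using tm by simp
    also have "\<dots> \<le> (\<Sum>k\<le>p. (2 powr \<gamma> * K) * a p * (real k + 1) powr (e' - 1))"
      using ai by (intro sum_mono mult_right_mono) auto
    also have "\<dots> = (2 powr \<gamma> * K) * a p * (\<Sum>k\<le>p. (real k + 1) powr (e' - 1))"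
      by (simp add: sum_distrib_left)
    also have "\<dots> \<le> (2 powr \<gamma> * K) * a p * ((real p + 1) powr e' / e')"
      using sum_powr_bound[OF e'0] K1 mpos[of p] unfolding a_def by (intro mult_left_mono) auto
    also have "\<dots> = C * m p / (real p + 1) powr \<beta>"
    proof -
      have "(real p + 1) powr \<beta> * (real p + 1) powr e' = (real p + 1) powr \<gamma>"
        unfolding \<gamma>_def by (simp add: powr_add[symmetric])
      moreover have "0 < (real p + 1) powr \<beta>" "0 < (real p + 1) powr e'" by auto
      ultimately show ?thesis unfolding a_def C_def using e'0
        by (simp add: field_simps)
    qed
    finally show "(\<Sum>k\<le>p. m k / (real k + 1) powr (1 + \<beta>)) \<le> C * m p / (real p + 1) powr \<beta>" .
  qed
qed

end

context mq begin

lemma pow2_shift: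
  assumes p1: "1 \<le> p" and N: "1 \<le> N"
  shows "real N powr \<beta> * (real p + 1) powr \<beta> \<le> 2 powr \<beta> * (real N * real p + 1) powr \<beta>"
proof -
  have "real N * (real p + 1) \<le> 2 * (real N * real p + 1)"
  proof -
    have "real N \<le> real N * real p + 2" using p1 N
      by (metis add_increasing2 mult_cancel_left1 mult_left_mono of_nat_0_le_iff of_nat_1 of_nat_le_iff zero_le_numeral le_add_same_cancel1 add_le_cancel_left order_trans)
    thus ?thesis by (simp add: algebra_simps)
  qed
  hence "(real N * (real p + 1)) powr \<beta> \<le> (2 * (real N * real p + 1)) powr \<beta>"
    using bpos by (intro powr_mono2) auto
  thus ?thesis unfolding powr_mult by simp
qed

lemma c9_c6: assumes C9 shows C6
proof -
  obtain C where C0: "0 < C"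
    and Cb: "\<And>p. (\<Sum>k\<le>p. m k / (real k + 1) powr (1 + \<beta>)) \<le> C * m p / (real p + 1) powr \<beta>"
    using assms unfolding C9_def by blast
  define G where "G = (\<lambda>k. m k / (real k + 1) powr (1 + \<beta>))"
  define s where "s = (\<lambda>p. \<Sum>k\<le>p. G k)"
  define B where "B = (\<lambda>p. m p / (real p + 1) powr \<beta>)"
  have Gpos: "\<And>k. 0 < G k" unfolding G_def using mpos by simp
  have spos: "\<And>p. 0 \<le> s p" unfolding s_def using Gpos by (simp add: sum_nonneg less_imp_le)
  have sB: "\<And>p. s p \<le> C * B p" unfolding s_def B_def G_def using Cb by (simp add: mult.assoc divide_inverse)
  define c where "c = 2 powr (2 + \<beta>)"
  have c0: "0 < c" unfolding c_def by simp
  have block: "s (2 * p) \<ge> s p + B p / c" if p1: "1 \<le> p" for p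
  proof -
    have split: "{..2 * p} = {..p} \<union> {p<..2 * p}" by auto
    have "s (2 * p) = s p + (\<Sum>k\<in>{p<..2 * p}. G k)"
      unfolding s_def split by (subst sum.union_disjoint) auto
    moreover have "B p / c \<le> (\<Sum>k\<in>{p<..2 * p}. G k)"
    proof -
      have lb: "m p / (2 * (real p + 1)) powr (1 + \<beta>) \<le> G k" if k: "k \<in> {p<..2 * p}" for k
      proof -
        have "(real k + 1) powr (1 + \<beta>) \<le> (2 * (real p + 1)) powr (1 + \<beta>)"
          using k bpos by (intro powr_mono2) auto
        moreover have "m p \<le> m k" using k by (intro mle) auto
        ultimately show ?thesis unfolding G_def
          by (intro frac_le) (auto intro: less_imp_le mpos)
      qed
      have "real (card {p<..2 * p}) * (m p / (2 * (real p + 1)) powr (1 + \<beta>)) \<le> (\<Sum>k\<in>{p<..2 * p}. G k)"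
        by (rule sum_bounded_below) (use lb in auto)
      moreover have "card {p<..2 * p} = p" by simp
      moreover have "B p / c \<le> real p * (m p / (2 * (real p + 1)) powr (1 + \<beta>))"
      proof -
        have e1: "(2 * (real p + 1)) powr (1 + \<beta>) = 2 * 2 powr \<beta> * ((real p + 1) * (real p + 1) powr \<beta>)"
          unfolding powr_mult by (simp add: powr_add)
        have e2: "c = 4 * 2 powr \<beta>" unfolding c_def by (simp add: powr_add)
        have "real p + 1 \<le> 2 * real p" using p1 by simp
        hence "m p * (real p + 1) \<le> m p * (2 * real p)" using mpos[of p] by (intro mult_left_mono) auto
        moreover define Y where "Y = 2 powr \<beta> * (real p + 1) powr \<beta>"
        moreover have Y0: "0 < Y" unfolding Y_def by simp
        moreover have "B p / c = (m p * (real p + 1)) / (4 * Y * (real p + 1))"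
        proof -
          have "B p / c = m p / (4 * Y)" unfolding B_def e2 Y_def by (simp add: mult_ac)
          also have "\<dots> = (m p * (real p + 1)) / (4 * Y * (real p + 1))" by simp
          finally show ?thesis .
        qed
        moreover have "real p * (m p / (2 * 2 powr \<beta> * ((real p + 1) * (real p + 1) powr \<beta>)))
            = (m p * (2 * real p)) / (4 * Y * (real p + 1))"
          unfolding Y_def by (simp add: mult_ac)
        ultimately show ?thesis unfolding e1
          by (simp only:) (intro divide_right_mono, auto)
      qed
      ultimately show ?thesis by simp
    qed
    ultimately show ?thesis by simp
  qed
  define \<delta> where "\<delta> = 1 / (C * c)"
  have d0: "0 < \<delta>" unfolding \<delta>_def using C0 c0 by simp
  have step: "(1 + \<delta>) * s p \<le> s (2 * p)" if "1 \<le> p" for p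
  proof -
    have "\<delta> * s p \<le> B p / c" unfolding \<delta>_def using sB[of p] C0 c0 by (simp add: field_simps)
    thus ?thesis using block[OF that] by (simp add: algebra_simps)
  qed
  have it: "(1 + \<delta>) ^ j * s p \<le> s (2 ^ j * p)" if "1 \<le> p" for p j
    using iter_growth[of 1 "1 + \<delta>" s 2 p j] step that d0 by auto
  define A where "A = 1 / (C * c * 2 powr \<beta>)"
  have A0: "0 < A" unfolding A_def using C0 c0 by simp
  show C6
  proof (rule dyadic_c6[OF A0, of "1 + \<delta>"])
    show "1 < 1 + \<delta>" using d0 by simp
    fix j p :: nat assume p1: "1 \<le> p"
    define N :: nat where "N = 2 ^ (j + 1)"
    have N1: "1 \<le> N" unfolding N_def by simp
    have "(1 + \<delta>) ^ j * (B p / c) \<le> (1 + \<delta>) ^ j * s (2 * p)"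
      using block[OF p1] spos[of p] d0 by (intro mult_left_mono) auto
    also have "\<dots> \<le> s (2 ^ j * (2 * p))" using it[of "2 * p" j] p1 by simp
    also have "2 ^ j * (2 * p) = N * p" unfolding N_def by simp
    also have "s (N * p) \<le> C * B (N * p)" by (rule sB)
    finally have h: "(1 + \<delta>) ^ j * (B p / c) \<le> C * (m (N * p) / (real N * real p + 1) powr \<beta>)"
      unfolding B_def by simp
    have "0 < real N * real p + 1" by (simp add: add_nonneg_pos)
    hence P: "0 < (real N * real p + 1) powr \<beta>" "0 < (real p + 1) powr \<beta>" by auto
    have ps: "real N powr \<beta> * (real p + 1) powr \<beta> \<le> 2 powr \<beta> * (real N * real p + 1) powr \<beta>"
      by (rule pow2_shift[OF p1 N1])
    have "A * (1 + \<delta>) ^ j * real N powr \<beta> * m p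
        = ((1 + \<delta>) ^ j * (B p / c)) * (real N powr \<beta> * (real p + 1) powr \<beta>) / (C * 2 powr \<beta>)"
      unfolding A_def B_def using P C0 c0 by (simp add: field_simps)
    also have "\<dots> \<le> (C * (m (N * p) / (real N * real p + 1) powr \<beta>)) * (2 powr \<beta> * (real N * real p + 1) powr \<beta>) / (C * 2 powr \<beta>)"
    proof (rule divide_right_mono[OF mult_mono[OF h ps]])
      show "0 \<le> C * (m (N * p) / (real N * real p + 1) powr \<beta>)"
        using C0 P mpos[of "N * p"] by simp
    qed (use C0 in auto)
    also have "\<dots> = m (N * p)" using P C0 by simp
    finally show "A * (1 + \<delta>) ^ j * real (2 ^ (j + 1)) powr \<beta> * m p \<le> m (2 ^ (j + 1) * p)"
      unfolding N_def by simp
  qed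
qed

end

context mq begin

definition "C1 \<equiv> (\<exists>C>0. \<forall>p. summable (\<lambda>k. (real (k + p) + 1) powr (\<beta> - 1) / m (k + p)) \<and>
                 (\<Sum>k. (real (k + p) + 1) powr (\<beta> - 1) / m (k + p))
                    \<le> C * (real p + 1) powr \<beta> / m p)"

lemma g_lim:
  assumes "0 < \<epsilon>"
  shows "(\<lambda>k. (real (k + p) + 1) powr (- \<epsilon>)) \<longlonglongrightarrow> 0"
proof -
  have "filterlim (\<lambda>k. (real p + 1) + real k) at_top sequentially"
    by (rule filterlim_tendsto_add_at_top[OF tendsto_const filterlim_real_sequentially])
  hence "filterlim (\<lambda>k. real (k + p) + 1) at_top sequentially"
    by (simp add: algebra_simps)
  thus ?thesis using assms by (intro tendsto_neg_powr) auto
qed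

lemma c2_c1: assumes C2 shows C1
proof -
  obtain \<epsilon> K where e: "0 < \<epsilon>"
    and K: "\<forall>p q. 1 \<le> p \<longrightarrow> p \<le> q \<longrightarrow> m p / real p powr (\<beta> + \<epsilon>) \<le> K * (m q / real q powr (\<beta> + \<epsilon>))"
    using assms unfolding C2_def almost_increasing_def by blast
  define \<gamma> where "\<gamma> = \<beta> + \<epsilon>"
  have g0: "0 \<le> \<gamma>" unfolding \<gamma>_def using e bpos by simp
  define K' where "K' = 2 powr \<gamma> * K"
  have ai: "\<And>p q. p \<le> q \<Longrightarrow> m p / (real p + 1) powr \<gamma> \<le> K' * (m q / (real q + 1) powr \<gamma>)"
    unfolding K'_def by (rule ai_shift[OF g0 K[folded \<gamma>_def]])
  have K1: "1 \<le> K" by (rule K_ge1[OF K])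
  have K'0: "0 < K'" unfolding K'_def using K1 by simp
  define T where "T = 2 powr (1 + \<epsilon>) / \<epsilon>"
  have T0: "0 < T" unfolding T_def using e by simp
  define F where "F = (\<lambda>n. (real n + 1) powr (\<beta> - 1) / m n)"
  define g where "g = (\<lambda>n. (real n + 1) powr (- \<epsilon>))"
  show C1 unfolding C1_def
  proof (intro exI[of _ "K' * T"] conjI allI)
    show "0 < K' * T" using K'0 T0 by simp
    fix p
    define Z where "Z = K' * (real p + 1) powr \<gamma> / m p * T"
    have Z0: "0 \<le> Z" unfolding Z_def using K'0 T0 mpos[of p] by simp
    have Fb: "F n \<le> Z * (g n - g (Suc n))" if pn: "p \<le> n" for n
    proof -
      have "m p / (real p + 1) powr \<gamma> \<le> K' * (m n / (real n + 1) powr \<gamma>)" by (rule ai[OF pn])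
      hence r: "(real n + 1) powr \<gamma> / m n \<le> K' * (real p + 1) powr \<gamma> / m p"
        using mpos[of p] mpos[of n] by (simp add: field_simps)
      have sp: "(real n + 1) powr (\<beta> - 1) = (real n + 1) powr \<gamma> * (real n + 1) powr (-1 - \<epsilon>)"
        unfolding \<gamma>_def by (simp add: powr_add[symmetric])
      have "F n = ((real n + 1) powr \<gamma> / m n) * (real n + 1) powr (-1 - \<epsilon>)"
        unfolding F_def sp by simp
      also have "\<dots> \<le> (K' * (real p + 1) powr \<gamma> / m p) * (T * (g n - g (Suc n)))"
      proof (rule mult_mono[OF r])
        show "(real n + 1) powr (-1 - \<epsilon>) \<le> T * (g n - g (Suc n))"
          unfolding T_def g_def using tail_step[OF e, of n] by (simp add: add.commute add.left_commute)
        show "0 \<le> K' * (real p + 1) powr \<gamma> / m p" using K'0 mpos[of p] by simp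
      qed simp
      finally show ?thesis unfolding Z_def by (simp add: mult_ac)
    qed
    have sums: "(\<lambda>k. Z * (g (k + p) - g (Suc (k + p)))) sums (Z * g p)"
    proof -
      have "(\<lambda>k. g (k + p)) \<longlonglongrightarrow> 0" unfolding g_def using g_lim[OF e] by simp
      from telescope_sums'[OF this] have "(\<lambda>k. g (k + p) - g (Suc k + p)) sums (g (0 + p) - 0)" .
      hence "(\<lambda>k. g (k + p) - g (Suc (k + p))) sums g p" by simp
      thus ?thesis by (rule sums_mult)
    qed
    have Fnn: "\<And>n. 0 \<le> F n" unfolding F_def using mpos by (simp add: less_imp_le)
    have Fb': "\<And>k. F (k + p) \<le> Z * (g (k + p) - g (Suc (k + p)))" using Fb by simp
    have summ: "summable (\<lambda>k. F (k + p))"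
      by (rule summable_comparison_test[OF _ sums_summable[OF sums]]) (use Fnn Fb' in auto)
    thus "summable (\<lambda>k. (real (k + p) + 1) powr (\<beta> - 1) / m (k + p))" unfolding F_def by simp
    have "(\<Sum>k. F (k + p)) \<le> Z * g p"
      using suminf_le[OF Fb' summ sums_summable[OF sums]] sums_unique[OF sums] by simp
    also have "Z * g p = K' * T * (real p + 1) powr \<beta> / m p"
    proof -
      have "(real p + 1) powr \<gamma> * (real p + 1) powr (- \<epsilon>) = (real p + 1) powr \<beta>"
        unfolding \<gamma>_def by (simp add: powr_add[symmetric])
      thus ?thesis unfolding Z_def g_def by (simp add: field_simps)
    qed
    finally show "(\<Sum>k. (real (k + p) + 1) powr (\<beta> - 1) / m (k + p)) \<le> K' * T * (real p + 1) powr \<beta> / m p"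
      unfolding F_def by simp
  qed
qed

end

lemma aux24: "(a::real) * (2 * x) / (4 * y) = x * (a / (2 * y))"
  by (cases "y = 0") (simp_all add: field_simps)

context mq begin

lemma c1_c6: assumes C1 shows C6
proof -
  define F where "F = (\<lambda>n. (real n + 1) powr (\<beta> - 1) / m n)"
  obtain C where C0: "0 < C" and Cs: "\<And>p. summable (\<lambda>k. F (k + p))"
    and Cb: "\<And>p. (\<Sum>k. F (k + p)) \<le> C * (real p + 1) powr \<beta> / m p"
    using assms unfolding C1_def F_def by blast
  define t where "t = (\<lambda>p. \<Sum>k. F (k + p))"
  have Fpos: "\<And>n. 0 < F n" unfolding F_def using mpos by simp
  have tsplit: "t p = t (2 * p) + (\<Sum>n<p. F (n + p))" for p
  proof -
    have "t p = (\<Sum>n. F (n + p + p)) + (\<Sum>n<p. F (n + p))"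
      unfolding t_def by (rule suminf_split_initial_segment[OF Cs])
    moreover have "(\<lambda>n. F (n + p + p)) = (\<lambda>n. F (n + 2 * p))"
    proof
      fix n show "F (n + p + p) = F (n + 2 * p)" by (simp add: mult_2 add.assoc)
    qed
    ultimately show ?thesis unfolding t_def by simp
  qed
  have tnn: "\<And>p. 0 \<le> t p" unfolding t_def using Cs Fpos by (intro suminf_nonneg) (auto intro: less_imp_le)
  have block: "(real p + 1) powr \<beta> / (4 * m (2 * p)) \<le> (\<Sum>n<p. F (n + p))" if p1: "1 \<le> p" for p
  proof -
    have lb: "(real p + 1) powr \<beta> / (2 * (real p + 1) * m (2 * p)) \<le> F (n + p)" if n: "n < p" for n
    proof -
      have x0: "0 < real (n + p) + 1" by simp
      have "F (n + p) = (real (n + p) + 1) powr \<beta> / ((real (n + p) + 1) * m (n + p))"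
        unfolding F_def using x0 by (simp add: powr_diff)
      moreover have "(real p + 1) powr \<beta> \<le> (real (n + p) + 1) powr \<beta>" using bpos by (intro powr_mono2) auto
      moreover have "(real (n + p) + 1) * m (n + p) \<le> 2 * (real p + 1) * m (2 * p)"
        using n mpos[of "n + p"] by (intro mult_mono mle) auto
      ultimately show ?thesis using x0 mpos[of "n + p"]
        by (simp del: of_nat_add) (intro frac_le, auto)
    qed
    have "real (card {..<p}) * ((real p + 1) powr \<beta> / (2 * (real p + 1) * m (2 * p))) \<le> (\<Sum>n<p. F (n + p))"
      by (rule sum_bounded_below) (use lb in auto)
    moreover have "(real p + 1) powr \<beta> / (4 * m (2 * p)) \<le> real p * ((real p + 1) powr \<beta> / (2 * (real p + 1) * m (2 * p)))"
    proof -
      define Y where "Y = (real p + 1) powr \<beta> / m (2 * p)"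
      have Y0: "0 < Y" unfolding Y_def using mpos by simp
      have nz: "real p + 1 \<noteq> 0" by simp
      have "(real p + 1) powr \<beta> / (4 * m (2 * p)) = Y / 4" unfolding Y_def by simp
      also have "\<dots> = Y * (real p + 1) / (4 * (real p + 1))" by (rule mult_divide_mult_cancel_right[OF nz, symmetric])
      finally have "(real p + 1) powr \<beta> / (4 * m (2 * p)) = Y * (real p + 1) / (4 * (real p + 1))" .
      also have "\<dots> \<le> Y * (2 * real p) / (4 * (real p + 1))"
        using p1 Y0 by (intro divide_right_mono mult_left_mono) auto
      also have "\<dots> = real p * ((real p + 1) powr \<beta> / (2 * (real p + 1) * m (2 * p)))"
      proof -
        have a: "Y * (2 * real p) / (4 * (real p + 1)) = real p * (Y / (2 * (real p + 1)))" by (rule aux24)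
        have b: "(real p + 1) powr \<beta> / (2 * (real p + 1) * m (2 * p)) = Y / (2 * (real p + 1))"
          unfolding Y_def by (simp add: mult.commute)
        show ?thesis unfolding a b ..
      qed
      finally show ?thesis .
    qed
    ultimately show ?thesis by simp
  qed
  define \<delta> where "\<delta> = 1 / (4 * C * 2 powr \<beta>)"
  have d0: "0 < \<delta>" unfolding \<delta>_def using C0 by simp
  have t2: "t (2 * p) \<le> C * 2 powr \<beta> * ((real p + 1) powr \<beta> / m (2 * p))" for p
  proof -
    have "t (2 * p) \<le> C * (real (2 * p) + 1) powr \<beta> / m (2 * p)" unfolding t_def by (rule Cb)
    also have "(real (2 * p) + 1) powr \<beta> \<le> (2 * (real p + 1)) powr \<beta>" using bpos by (intro powr_mono2) auto
    hence "C * (real (2 * p) + 1) powr \<beta> / m (2 * p) \<le> C * (2 * (real p + 1)) powr \<beta> / m (2 * p)"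
      using C0 mpos[of "2 * p"] by (intro divide_right_mono mult_left_mono) auto
    also have "\<dots> = C * 2 powr \<beta> * ((real p + 1) powr \<beta> / m (2 * p))" unfolding powr_mult by simp
    finally show ?thesis .
  qed
  define r where "r = 1 / (1 + \<delta>)"
  have r0: "0 \<le> r" unfolding r_def using d0 by simp
  have step: "r * (- t p) \<le> - t (2 * p)" if p1: "1 \<le> p" for p
  proof -
    have "\<delta> * t (2 * p) \<le> (real p + 1) powr \<beta> / (4 * m (2 * p))"
      using t2[of p] C0 d0 unfolding \<delta>_def by (simp add: field_simps)
    hence "(1 + \<delta>) * t (2 * p) \<le> t p" using tsplit[of p] block[OF p1] by (simp add: algebra_simps)
    thus ?thesis unfolding r_def using d0 by (simp add: field_simps)
  qed
  have it: "r ^ j * (- t p) \<le> - t (2 ^ j * p)" if "1 \<le> p" for p j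
    using iter_growth[of 1 r "\<lambda>p. - t p" 2 p j] step that r0 by auto
  define A where "A = 1 / (4 * C * 2 powr \<beta> * 2 powr \<beta>)"
  have A0: "0 < A" unfolding A_def using C0 by simp
  show C6
  proof (rule dyadic_c6[OF A0, of "1 + \<delta>"])
    show "1 < 1 + \<delta>" using d0 by simp
    fix j p :: nat assume p1: "1 \<le> p"
    define N :: nat where "N = 2 ^ j"
    have N1: "1 \<le> N" unfolding N_def by simp
    have Np1: "1 \<le> N * p" using N1 p1 by simp
    have "(real (N * p) + 1) powr \<beta> / (4 * m (2 * (N * p))) \<le> t (2 * (N * p)) + (\<Sum>n<N * p. F (n + N * p))"
      using block[OF Np1] tnn[of "2 * (N * p)"] by simp
    also have "\<dots> = t (N * p)" by (rule tsplit[symmetric])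
    also have "\<dots> \<le> r ^ j * t p" using it[OF p1, of j] unfolding N_def by simp
    also have "\<dots> \<le> r ^ j * (C * (real p + 1) powr \<beta> / m p)"
      using Cb[of p] r0 unfolding t_def by (intro mult_left_mono) auto
    finally have h: "(real (N * p) + 1) powr \<beta> / (4 * m (2 * (N * p))) \<le> r ^ j * (C * (real p + 1) powr \<beta> / m p)" .
    have rj: "r ^ j * (1 + \<delta>) ^ j = 1" unfolding r_def using d0 by (simp add: power_mult_distrib[symmetric])
    have "0 < real N * real p + 1" by (simp add: add_nonneg_pos)
    hence P: "0 < (real p + 1) powr \<beta>" "0 < (real N * real p + 1) powr \<beta>" by auto
    have m2: "0 < m (2 * (N * p))" "0 < m p" using mpos by auto
    have h2: "(1 + \<delta>) ^ j * (real N * real p + 1) powr \<beta> * m p \<le> 4 * C * (real p + 1) powr \<beta> * m (2 * (N * p))"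
    proof -
      have "(1 + \<delta>) ^ j * (real N * real p + 1) powr \<beta> * m p
          = (1 + \<delta>) ^ j * (4 * m (2 * (N * p)) * m p) * ((real (N * p) + 1) powr \<beta> / (4 * m (2 * (N * p))))"
        using m2 by simp
      also have "\<dots> \<le> (1 + \<delta>) ^ j * (4 * m (2 * (N * p)) * m p) * (r ^ j * (C * (real p + 1) powr \<beta> / m p))"
        using h m2 d0 by (intro mult_left_mono) auto
      also have "\<dots> = (r ^ j * (1 + \<delta>) ^ j) * (4 * C * (real p + 1) powr \<beta> * m (2 * (N * p)))"
        using m2 by (simp add: field_simps)
      finally show ?thesis unfolding rj by simp
    qed
    have ps: "real N powr \<beta> * (real p + 1) powr \<beta> \<le> 2 powr \<beta> * (real N * real p + 1) powr \<beta>"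
      by (rule pow2_shift[OF p1 N1])
    have "((1 + \<delta>) ^ j * real N powr \<beta> * m p) * (real p + 1) powr \<beta>
        = (1 + \<delta>) ^ j * m p * (real N powr \<beta> * (real p + 1) powr \<beta>)" by (simp add: mult_ac)
    also have "\<dots> \<le> (1 + \<delta>) ^ j * m p * (2 powr \<beta> * (real N * real p + 1) powr \<beta>)"
      using ps d0 m2 by (intro mult_left_mono) auto
    also have "\<dots> = 2 powr \<beta> * ((1 + \<delta>) ^ j * (real N * real p + 1) powr \<beta> * m p)" by (simp add: mult_ac)
    also have "\<dots> \<le> 2 powr \<beta> * (4 * C * (real p + 1) powr \<beta> * m (2 * (N * p)))"
      using h2 by (intro mult_left_mono) auto
    also have "\<dots> = (2 powr \<beta> * 4 * C * m (2 * (N * p))) * (real p + 1) powr \<beta>" by (simp add: mult_ac)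
    finally have h3: "(1 + \<delta>) ^ j * real N powr \<beta> * m p \<le> 2 powr \<beta> * 4 * C * m (2 * (N * p))"
      using P by (simp add: mult_le_cancel_right)
    have e2N: "real (2 ^ (j + 1)) powr \<beta> = 2 powr \<beta> * real N powr \<beta>"
      unfolding N_def by (simp add: powr_mult[symmetric])
    have "A * (1 + \<delta>) ^ j * real (2 ^ (j + 1)) powr \<beta> * m p = ((1 + \<delta>) ^ j * real N powr \<beta> * m p) / (2 powr \<beta> * 4 * C)"
      unfolding e2N A_def using C0 by (simp add: field_simps)
    also have "\<dots> \<le> m (2 * (N * p))" using h3 C0 by (simp add: field_simps)
    also have "2 * (N * p) = 2 ^ (j + 1) * p" unfolding N_def by simp
    finally show "A * (1 + \<delta>) ^ j * real (2 ^ (j + 1)) powr \<beta> * m p \<le> m (2 ^ (j + 1) * p)" .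
  qed
qed

end


lemma ws_mq:
  assumes "weight_sequence M" "0 \<le> \<beta>"
  shows "mq (quotients M) \<beta>"
proof
  have Mpos: "\<And>p. 0 < M p" and lc: "\<And>p. 1 \<le> p \<Longrightarrow> (M p)\<^sup>2 \<le> M (p - 1) * M (p + 1)"
    using assms(1) unfolding weight_sequence_def by auto
  show "\<And>p. 0 < quotients M p" unfolding quotients_def using Mpos by simp
  show "mono (quotients M)"
  proof (rule incseq_SucI)
    fix p
    have "(M (Suc p))\<^sup>2 \<le> M p * M (Suc (Suc p))" using lc[of "Suc p"] by simp
    thus "quotients M p \<le> quotients M (Suc p)"
      unfolding quotients_def using Mpos[of p] Mpos[of "Suc p"]
      by (simp add: field_simps power2_eq_square)
  qed
  show "0 \<le> \<beta>" by (fact assms(2))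
qed

theorem theorem3p11:
  fixes M :: "nat \<Rightarrow> real" and \<beta> :: real
  assumes "weight_sequence M" and "\<beta> \<ge> 0"
  defines "m \<equiv> quotients M"
  defines "c1 \<equiv> (\<exists>C>0. \<forall>p. summable (\<lambda>k. (real (k + p) + 1) powr (\<beta> - 1) / m (k + p)) \<and>
                 (\<Sum>k. (real (k + p) + 1) powr (\<beta> - 1) / m (k + p))
                    \<le> C * (real p + 1) powr \<beta> / m p)"
  defines "c2 \<equiv> (\<exists>\<epsilon>>0. almost_increasing (\<lambda>p. m p / real p powr (\<beta> + \<epsilon>)))"
  defines "c3 \<equiv> (\<exists>h. seq_equiv h m \<and> mono (\<lambda>p. (real p + 1) powr (- \<beta>) * h p) \<and>
                 (INF p\<in>{1..}. h (2 * p) / h p) > 2 powr \<beta>)"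
  defines "c4 \<equiv> ((\<lambda>k. Liminf sequentially (\<lambda>p. ereal (m (k * p) / (real k powr \<beta> * m p))))
                 \<longlonglongrightarrow> PInfty)"
  defines "c5 \<equiv> (\<exists>k::nat. k \<ge> 2 \<and>
                 Liminf sequentially (\<lambda>p. ereal (m (k * p) / m p)) > ereal (real k powr \<beta>))"
  defines "c6 \<equiv> (\<forall>\<theta>::real. 0 < \<theta> \<and> \<theta> < 1 \<longrightarrow> (\<exists>k::nat. k \<ge> 2 \<and>
                 (\<forall>p\<ge>1. m p \<le> \<theta> * real k powr (- \<beta>) * m (k * p))))"
  defines "c7 \<equiv> (beta_index m > ereal \<beta>)"
  defines "c8 \<equiv> (gamma_index M > ereal \<beta>)"
  defines "c9 \<equiv> (\<exists>C>0. \<forall>p. (\<Sum>k\<le>p. m k / (real k + 1) powr (1 + \<beta>))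
                 \<le> C * m p / (real p + 1) powr \<beta>)"
  shows "(c1 \<longleftrightarrow> c2) \<and> (c1 \<longleftrightarrow> c3) \<and> (c1 \<longleftrightarrow> c4) \<and> (c1 \<longleftrightarrow> c5) \<and> (c1 \<longleftrightarrow> c6) \<and>
         (c1 \<longleftrightarrow> c7) \<and> (c1 \<longleftrightarrow> c8) \<and> (c1 \<longleftrightarrow> c9)"
proof -
  interpret mq m \<beta> unfolding m_def by (rule ws_mq[OF assms(1,2)])
  have e1: "c1 = C1" unfolding c1_def C1_def ..
  have e2: "c2 = C2" unfolding c2_def C2_def ..
  have e3: "c3 = C3" unfolding c3_def C3_def ..
  have e4: "c4 = C4" unfolding c4_def C4_def ..
  have e5: "c5 = C5" unfolding c5_def C5_def ..
  have e6: "c6 = C6" unfolding c6_def C6_def ..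
  have e7: "c7 = C7" unfolding c7_def C7_def ..
  have e8: "c8 = C8" unfolding c8_def C8_def gamma_index_def P_cond_def by (simp add: m_def)
  have e9: "c9 = C9" unfolding c9_def C9_def ..
  have h6: "C6 \<longleftrightarrow> C2" using c6_c2 c2_c4 c4_c5 c5_c6 by blast
  show ?thesis unfolding e1 e2 e3 e4 e5 e6 e7 e8 e9
    using h6 c2_c1 c1_c6 c2_c3 c3_c6 c2_c4 c4_c5 c5_c6 c2_c7 c7_c5 c2_c8 c8_c2 c2_c9 c9_c6 by blast
qed

end
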